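(* Let $N$ be a fixed positive integer and let $R$ be a computable POVM on $\Sigma^*$ (with values in $N\times N$ matrices). Then: (i) there exists $d\in\mathbb{N}$ such that for every density matrix $\rho\in\mathrm{Her}(N)$ and every $s\in\Sigma^*$, $$K(s)-d\le -\log_2 \operatorname{tr}(\rho R(s));$$ (ii) there exists a real $c>0$ such that for every density matrix $\rho\in\mathrm{Her}(N)$ and every $s\in\Sigma^*$, $$\operatorname{tr}(\rho R(s))\le c\,P(s).$$
   Context: $\Sigma^*=\{\lambda,0,1,00,01,\dots\}$ is the set of finite binary strings. $\mathrm{Her}(N)$ is the set of $N\times N$ complex Hermitian matrices; for $A,B\in\mathrm{Her}(N)$, $A\leqslant B$ means $B-A$ is positive semi-definite. A density matrix is $\rho\in\mathrm{Her}(N)$ with $0\leqslant\rho$ and $\operatorname{tr}\rho=1$. A semi-POVM on $\Sigma^*$ is a map $R:\Sigma^*\to\mathrm{Her}(N)$ with $0\leqslant R(s)$ for all $s$ and $\sum_{s\in\Sigma^*}R(s)\leqslant I$; it is a POVM on $\Sigma^*$ if moreover $\sum_{s}R(s)=I$. $\mathbb{C}_Q=\{a+ib: a,b\in\mathbb{Q}\}$. A map $F:\Sigma^*\to M_N(\mathbb{C})$ is computable if there is a total recursive $G:\Sigma^*\times\mathbb{N}\to M_N(\mathbb{C}_Q)$ with $\|F(s)-G(s,k)\|<2^{-k}$ (operator norm) for all $s,k$. A computer is a partial recursive function $C:\Sigma^*\to\Sigma^*$ whose domain is prefix-free; a computer $U$ is optimal if for every computer $C$ there is a constant $\mathrm{sim}(C)$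 such that whenever $C(p)$ is defined there is $p'$ with $U(p')=C(p)$ and $|p'|\le|p|+\mathrm{sim}(C)$. Fix an optimal computer $U$. $K(s)=\min\{|p|: U(p)=s\}$ (Kolmogorov complexity) and $P(s)=\sum_{U(p)=s}2^{-|p|}$. $-\log_2 0=\infty$. *)

theory Defs
  imports "HOL-Analysis.Analysis" "HOL-Library.Nat_Bijection" "HOL-Library.Sublist"
begin

datatype recf = Zero | Succ | Proj nat | Comp recf "recf list" | Prec recf recf | Mn recf

inductive eval :: "recf \<Rightarrow> nat list \<Rightarrow> nat \<Rightarrow> bool" where
  eval_Zero: "eval Zero xs 0"
| eval_Succ: "eval Succ (x # xs) (Suc x)"
| eval_Proj: "i < length xs \<Longrightarrow> eval (Proj i) xs (xs ! i)"
| eval_Comp: "length ys = length gs \<Longrightarrow> (\<forall>i<length gs. eval (gs ! i) xs (ys ! i))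
              \<Longrightarrow> eval f ys z \<Longrightarrow> eval (Comp f gs) xs z"
| eval_Prec0: "eval f xs y \<Longrightarrow> eval (Prec f g) (0 # xs) y"
| eval_PrecS: "eval (Prec f g) (n # xs) y \<Longrightarrow> eval g (n # y # xs) z
              \<Longrightarrow> eval (Prec f g) (Suc n # xs) z"
| eval_Mn: "eval f (n # xs) 0 \<Longrightarrow> (\<forall>m<n. \<exists>y. eval f (m # xs) y \<and> y > 0)
              \<Longrightarrow> eval (Mn f) xs n"

definition partial_recursive1 :: "(nat \<Rightarrow> nat option) \<Rightarrow> bool" where
  "partial_recursive1 \<phi> \<longleftrightarrow> (\<exists>f. \<forall>x y. \<phi> x = Some y \<longleftrightarrow> eval f [x] y)"

definition total_recursive :: "nat \<Rightarrow> (nat list \<Rightarrow> nat) \<Rightarrow> bool" where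
  "total_recursive k g \<longleftrightarrow> (\<exists>f. \<forall>xs. length xs = k \<longrightarrow> eval f xs (g xs))"

text \<open>Computable bijection of binary strings onto nat (bijective base-2 numeration).\<close>
fun str_code :: "bool list \<Rightarrow> nat" where
  "str_code [] = 0"
| "str_code (b # bs) = 2 * str_code bs + (if b then 2 else 1)"

definition computer :: "(bool list \<Rightarrow> bool list option) \<Rightarrow> bool" where
  "computer C \<longleftrightarrow>
     (\<exists>\<phi>. partial_recursive1 \<phi> \<and> (\<forall>p. \<phi> (str_code p) = map_option str_code (C p))) \<and>
     (\<forall>p q. C p \<noteq> None \<longrightarrow> C q \<noteq> None \<longrightarrow> prefix p q \<longrightarrow> p = q)"

definition optimal_computer :: "(bool list \<Rightarrow> bool list option) \<Rightarrow> bool" where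
  "optimal_computer U \<longleftrightarrow> computer U \<and>
     (\<forall>C. computer C \<longrightarrow> (\<exists>sim::nat. \<forall>p s. C p = Some s \<longrightarrow>
         (\<exists>p'. U p' = Some s \<and> length p' \<le> length p + sim)))"

definition Kc :: "(bool list \<Rightarrow> bool list option) \<Rightarrow> bool list \<Rightarrow> nat" where
  "Kc U s = (LEAST n. \<exists>p. U p = Some s \<and> length p = n)"

definition Pc :: "(bool list \<Rightarrow> bool list option) \<Rightarrow> bool list \<Rightarrow> real" where
  "Pc U s = (\<Sum>\<^sub>\<infinity>p\<in>{p. U p = Some s}. (1/2) ^ length p)"

definition neg_log2 :: "real \<Rightarrow> ereal" where
  "neg_log2 x = (if x = 0 then \<infinity> else ereal (- log 2 x))"

definition adjoint_mat :: "complex^'n^'n \<Rightarrow> complex^'n^'n" where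
  "adjoint_mat A = (\<chi> i j. cnj (A $ j $ i))"

definition hermitian :: "complex^'n^'n \<Rightarrow> bool" where
  "hermitian A \<longleftrightarrow> adjoint_mat A = A"

definition psd :: "complex^'n^'n \<Rightarrow> bool" where
  "psd A \<longleftrightarrow> hermitian A \<and> (\<forall>x::complex^'n. 0 \<le> Re (\<Sum>i\<in>UNIV. cnj (x $ i) * (A *v x) $ i))"

definition loewner_le :: "complex^'n^'n \<Rightarrow> complex^'n^'n \<Rightarrow> bool" where
  "loewner_le A B \<longleftrightarrow> hermitian A \<and> hermitian B \<and> psd (B - A)"

definition density_matrix :: "complex^'n^'n \<Rightarrow> bool" where
  "density_matrix \<rho> \<longleftrightarrow> hermitian \<rho> \<and> loewner_le 0 \<rho> \<and> trace \<rho> = 1"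

definition povm :: "(bool list \<Rightarrow> complex^'n^'n) \<Rightarrow> bool" where
  "povm R \<longleftrightarrow> (\<forall>s. hermitian (R s) \<and> loewner_le 0 (R s)) \<and> (R has_sum mat 1) UNIV"

definition opnorm :: "complex^'n^'n \<Rightarrow> real" where
  "opnorm A = onorm (\<lambda>x::complex^'n. A *v x)"

text \<open>Decoding of nat onto Gaussian rationals C_Q = {a+ib : a,b rational} (surjective).\<close>
definition decode_cq :: "nat \<Rightarrow> complex" where
  "decode_cq n = (case prod_decode n of (a, r) \<Rightarrow> case prod_decode r of (b, e) \<Rightarrow>
      Complex (of_int (int_decode a) / real (Suc e)) (of_int (int_decode b) / real (Suc e)))"

definition computable_mat_fun :: "(bool list \<Rightarrow> complex^'n^'n) \<Rightarrow> bool" where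
  "computable_mat_fun F \<longleftrightarrow> (\<exists>g :: 'n \<Rightarrow> 'n \<Rightarrow> nat list \<Rightarrow> nat.
      (\<forall>i j. total_recursive 2 (g i j)) \<and>
      (\<forall>s k. opnorm (F s - (\<chi> i j. decode_cq (g i j [str_code s, k]))) < (1/2) ^ k))"

end

theory Submission
  imports Defs
begin

inductive_cases ZeroE: "eval Zero xs z"
inductive_cases SuccE: "eval Succ xs z"
inductive_cases ProjE: "eval (Proj i) xs z"
inductive_cases CompE: "eval (Comp f gs) xs z"
inductive_cases Prec0E: "eval (Prec f g) (0 # xs) z"
inductive_cases PrecSE: "eval (Prec f g) (Suc n # xs) z"
inductive_cases MnE: "eval (Mn f) xs z"

lemma eval_det: "eval f xs y \<Longrightarrow> eval f xs z \<Longrightarrow> y = z"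
proof (induction arbitrary: z rule: eval.induct)
  case (eval_Zero xs) then show ?case by (auto elim: ZeroE)
next
  case (eval_Succ x xs) then show ?case by (auto elim: SuccE)
next
  case (eval_Proj i xs) then show ?case by (auto elim: ProjE)
next
  case (eval_Comp ys gs xs f z')
  from eval_Comp.prems obtain ys' where l: "length ys' = length gs"
    and a: "\<forall>i<length gs. eval (gs ! i) xs (ys' ! i)" and e: "eval f ys' z"
    by (auto elim: CompE)
  have "ys = ys'"
  proof (rule nth_equalityI)
    show "length ys = length ys'" using l eval_Comp(1) by simp
    fix i assume "i < length ys"
    then show "ys ! i = ys' ! i" using a eval_Comp(3) eval_Comp(1) by auto
  qed
  then show ?case using eval_Comp(4) e by simp
next
  case (eval_Prec0 f xs y) from eval_Prec0.prems have "eval f xs z" by (rule Prec0E) 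
  then show ?case using eval_Prec0.IH by simp
next
  case (eval_PrecS f g n xs y z')
  from eval_PrecS.prems obtain y' where a: "eval (Prec f g) (n # xs) y'" and b: "eval g (n # y' # xs) z"
    by (auto elim: PrecSE)
  have "y = y'" using eval_PrecS.IH(1) a by blast
  then show ?case using eval_PrecS.IH(2) b by blast
next
  case (eval_Mn f n xs)
  from eval_Mn.prems obtain n' where n': "n' = z" "eval f (n' # xs) 0"
     "\<forall>m<n'. \<exists>y. eval f (m # xs) y \<and> y > 0"
    by (auto elim: MnE)
  show ?case
  proof (rule ccontr)
    assume "n \<noteq> z"
    then consider "n < n'" | "n' < n" using n' by linarith
    then show False
    proof cases
      case 1 then obtain y where y: "eval f (n # xs) y" "y > 0" using n'(3) by blast
      have "0 = y" using eval_Mn(2) y(1) by blast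
      then show False using y(2) by simp
    next
      case 2 then obtain y where y: "eval f (n' # xs) y" "\<forall>z. eval f (n'#xs) z \<longrightarrow> y = z" "y > 0"
        using eval_Mn(3) by blast
      have "y = 0" using y(2) n'(2) by blast
      then show False using y(3) by simp
    qed
  qed
qed

abbreviation TR where "TR \<equiv> total_recursive"

lemma tr_const: "TR k (\<lambda>_. c)"
proof (induction c)
  case 0 show ?case unfolding total_recursive_def by (auto intro: eval_Zero)
next
  case (Suc c)
  then obtain r where r: "\<forall>xs. length xs = k \<longrightarrow> eval r xs c" unfolding total_recursive_def by auto
  have "eval (Comp Succ [r]) xs (Suc c)" if "length xs = k" for xs
    by (rule eval_Comp[where ys="[c]"]) (auto intro: eval_Succ simp: r that)
  then show ?case unfolding total_recursive_def by blast
qed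

lemma tr_proj: "i < k \<Longrightarrow> TR k (\<lambda>xs. xs ! i)"
  unfolding total_recursive_def by (auto intro!: exI[of _ "Proj i"] eval_Proj)

lemma tr_list: "\<forall>f\<in>set fs. TR k f \<Longrightarrow>
  \<exists>rs. length rs = length fs \<and> (\<forall>xs. length xs = k \<longrightarrow> (\<forall>i<length fs. eval (rs ! i) xs ((fs ! i) xs)))"
proof (induction fs)
  case Nil then show ?case by simp
next
  case (Cons f fs)
  then obtain rs where rs: "length rs = length fs" "\<forall>xs. length xs = k \<longrightarrow> (\<forall>i<length fs. eval (rs ! i) xs ((fs ! i) xs))" by auto
  obtain r where r: "\<forall>xs. length xs = k \<longrightarrow> eval r xs (f xs)" using Cons.prems unfolding total_recursive_def by auto
  show ?case
    apply (rule exI[of _ "r # rs"])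
    using rs r by (auto simp: nth_Cons split: nat.split)
qed

lemma tr_comp: "TR (length fs) F \<Longrightarrow> \<forall>f\<in>set fs. TR k f \<Longrightarrow> TR k (\<lambda>xs. F (map (\<lambda>f. f xs) fs))"
proof -
  assume F: "TR (length fs) F" and fs: "\<forall>f\<in>set fs. TR k f"
  obtain rs where rs: "length rs = length fs" "\<forall>xs. length xs = k \<longrightarrow> (\<forall>i<length fs. eval (rs ! i) xs ((fs ! i) xs))"
    using tr_list[OF fs] by auto
  obtain r where r: "\<forall>xs. length xs = length fs \<longrightarrow> eval r xs (F xs)" using F unfolding total_recursive_def by auto
  have "eval (Comp r rs) xs (F (map (\<lambda>f. f xs) fs))" if "length xs = k" for xs
    by (rule eval_Comp[where ys="map (\<lambda>f. f xs) fs"]) (use rs r that in auto)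
  then show ?thesis unfolding total_recursive_def by blast
qed

lemma tr_comp1: "TR 1 F \<Longrightarrow> TR k f \<Longrightarrow> TR k (\<lambda>xs. F [f xs])"
  using tr_comp[where F=F and fs="[f]" and k=k] by simp
lemma tr_comp2: "TR 2 F \<Longrightarrow> TR k f \<Longrightarrow> TR k g \<Longrightarrow> TR k (\<lambda>xs. F [f xs, g xs])"
  using tr_comp[where F=F and fs="[f, g]" and k=k] by (simp add: numeral_2_eq_2)
lemma tr_comp3: "TR 3 F \<Longrightarrow> TR k f \<Longrightarrow> TR k g \<Longrightarrow> TR k h \<Longrightarrow> TR k (\<lambda>xs. F [f xs, g xs, h xs])"
  using tr_comp[where F=F and fs="[f, g, h]" and k=k] by (simp add: numeral_3_eq_3)

lemma tr_prec: "TR k F \<Longrightarrow> TR (Suc (Suc k)) G \<Longrightarrow>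
  TR (Suc k) (\<lambda>xs. rec_nat (F (tl xs)) (\<lambda>n a. G (n # a # tl xs)) (hd xs))"
proof -
  assume F: "TR k F" and G: "TR (Suc (Suc k)) G"
  obtain f where f: "\<forall>xs. length xs = k \<longrightarrow> eval f xs (F xs)" using F unfolding total_recursive_def by auto
  obtain g where g: "\<forall>xs. length xs = Suc (Suc k) \<longrightarrow> eval g xs (G xs)" using G unfolding total_recursive_def by auto
  have *: "eval (Prec f g) (n # ys) (rec_nat (F ys) (\<lambda>n a. G (n # a # ys)) n)" if "length ys = k" for n ys
  proof (induction n)
    case 0 show ?case using f that by (auto intro: eval_Prec0)
  next
    case (Suc n) show ?case using g that by (auto intro: eval_PrecS[OF Suc])
  qed
  show ?thesis unfolding total_recursive_def
  proof (intro exI allI impI)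
    fix xs :: "nat list" assume "length xs = Suc k"
    then obtain n ys where "xs = n # ys" "length ys = k" by (cases xs) auto
    then show "eval (Prec f g) xs (rec_nat (F (tl xs)) (\<lambda>n a. G (n # a # tl xs)) (hd xs))" using * by simp
  qed
qed

lemma tr_cong: "TR k f \<Longrightarrow> (\<And>xs. length xs = k \<Longrightarrow> f xs = g xs) \<Longrightarrow> TR k g"
  unfolding total_recursive_def by metis

lemma tr_cong': "TR k f \<Longrightarrow> k = k' \<Longrightarrow> (\<And>xs. length xs = k' \<Longrightarrow> f xs = g xs) \<Longrightarrow> TR k' g"
  using tr_cong by blast

lemma len1: "length xs = Suc 0 \<Longrightarrow> \<exists>a. xs = [a]"
  by (cases xs) auto
lemma len2: "length xs = 2 \<Longrightarrow> \<exists>a b. xs = [a, b]"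
  by (cases xs; cases "tl xs") (auto simp: numeral_2_eq_2)
lemma len3: "length xs = 3 \<Longrightarrow> \<exists>a b c. xs = [a, b, c]"
  by (cases xs; cases "tl xs"; cases "tl (tl xs)") (auto simp: numeral_3_eq_3)

lemma tr_succ1: "TR 1 (\<lambda>xs. Suc (xs ! 0))"
  unfolding total_recursive_def
  by (auto intro!: exI[of _ Succ] dest!: len1 intro: eval_Succ)

lemma rec_nat_add: "rec_nat y (\<lambda>n a. Suc a) n = n + y" by (induction n) auto
lemma rec_nat_mult: "rec_nat 0 (\<lambda>n a. a + y) n = n * y" by (induction n) auto
lemma rec_nat_monus: "rec_nat y (\<lambda>n a. a - Suc 0) n = y - n" by (induction n) auto
lemma rec_nat_pred: "rec_nat 0 (\<lambda>n a. n) m = m - Suc 0" by (cases m) auto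
lemma rec_nat_pow: "rec_nat (Suc 0) (\<lambda>n a. a * y) n = y ^ n" by (induction n) (simp_all add: algebra_simps)

lemma tr_add2: "TR 2 (\<lambda>xs. xs ! 0 + xs ! 1)"
proof -
  have "TR (Suc (Suc (Suc 0))) (\<lambda>xs. Suc (xs ! 1))"
    using tr_comp1[OF tr_succ1 tr_proj[of 1 3, simplified]] by (simp add: numeral_3_eq_3)
  from tr_prec[OF tr_proj[of 0 1, simplified] this]
  show ?thesis
    by (rule tr_cong') (auto dest!: len2 simp: rec_nat_add)
qed

lemma tr_add: "TR k f \<Longrightarrow> TR k g \<Longrightarrow> TR k (\<lambda>xs. f xs + g xs)"
  using tr_comp2[OF tr_add2] by simp

lemma tr_mult2: "TR 2 (\<lambda>xs. xs ! 0 * xs ! 1)"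
proof -
  have "TR (Suc (Suc (Suc 0))) (\<lambda>xs. xs ! 1 + xs ! 2)"
    using tr_add[OF tr_proj[of 1 3, simplified] tr_proj[of 2 3, simplified]] by (simp add: numeral_3_eq_3)
  from tr_prec[OF tr_const[of "Suc 0" 0] this]
  show ?thesis
    by (rule tr_cong') (auto dest!: len2 simp: rec_nat_mult)
qed

lemma tr_mult: "TR k f \<Longrightarrow> TR k g \<Longrightarrow> TR k (\<lambda>xs. f xs * g xs)"
  using tr_comp2[OF tr_mult2] by simp

lemma tr_pred1: "TR 1 (\<lambda>xs. xs ! 0 - 1)"
proof -
  have "TR (Suc (Suc 0)) (\<lambda>xs. xs ! 0)" using tr_proj[of 0 2] by (simp add: numeral_2_eq_2)
  from tr_prec[OF tr_const[of 0 0] this]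
  show ?thesis
    by (rule tr_cong') (auto dest!: len1 simp: rec_nat_pred)
qed

lemma tr_monus2: "TR 2 (\<lambda>xs. xs ! 1 - xs ! 0)"
proof -
  have "TR (Suc (Suc (Suc 0))) (\<lambda>xs. xs ! 1 - 1)"
    using tr_comp1[OF tr_pred1 tr_proj[of 1 3, simplified]] by (simp add: numeral_3_eq_3)
  from tr_prec[OF tr_proj[of 0 1, simplified] this]
  show ?thesis
    by (rule tr_cong') (auto dest!: len2 simp: rec_nat_monus)
qed

lemma tr_sub: "TR k f \<Longrightarrow> TR k g \<Longrightarrow> TR k (\<lambda>xs. f xs - g xs)"
  using tr_comp2[OF tr_monus2, of k g f] by simp

lemma tr_pow2: "TR 2 (\<lambda>xs. xs ! 1 ^ xs ! 0)"
proof -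
  have "TR (Suc (Suc (Suc 0))) (\<lambda>xs. xs ! 1 * xs ! 2)"
    using tr_mult[OF tr_proj[of 1 3, simplified] tr_proj[of 2 3, simplified]] by (simp add: numeral_3_eq_3)
  from tr_prec[OF tr_const[of "Suc 0" 1] this]
  show ?thesis
    by (rule tr_cong') (auto dest!: len2 simp: rec_nat_pow)
qed

lemma tr_pow: "TR k f \<Longrightarrow> TR k g \<Longrightarrow> TR k (\<lambda>xs. f xs ^ g xs)"
  using tr_comp2[OF tr_pow2, of k g f] by simp

lemma tr_le: assumes "TR k f" "TR k g" shows "TR k (\<lambda>xs. if f xs \<le> g xs then 1 else 0)"
proof -
  have "TR k (\<lambda>xs. 1 - (f xs - g xs))" using tr_sub[OF tr_const tr_sub[OF assms]] .
  then show ?thesis by (rule tr_cong) auto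
qed

lemma tr_ifP: assumes "TR k (\<lambda>xs. if P xs then 1 else 0)" "TR k f" "TR k g"
  shows "TR k (\<lambda>xs. if P xs then f xs else g xs)"
proof -
  have "TR k (\<lambda>xs. (if P xs then 1 else 0) * f xs + (1 - (if P xs then 1 else 0)) * g xs)"
    using tr_add[OF tr_mult[OF assms(1,2)] tr_mult[OF tr_sub[OF tr_const assms(1)] assms(3)]] .
  then show ?thesis by (rule tr_cong) auto
qed

lemma tr_and: assumes "TR k (\<lambda>xs. if P xs then 1 else 0)" "TR k (\<lambda>xs. if Q xs then 1 else 0)"
  shows "TR k (\<lambda>xs. if P xs \<and> Q xs then 1 else 0)"
proof -
  have "TR k (\<lambda>xs. (if P xs then 1 else 0) * (if Q xs then 1 else 0))" using tr_mult[OF assms] .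
  then show ?thesis by (rule tr_cong) auto
qed

lemma tr_not: assumes "TR k (\<lambda>xs. if P xs then 1 else 0)" shows "TR k (\<lambda>xs. if \<not> P xs then 1 else 0)"
proof -
  have "TR k (\<lambda>xs. 1 - (if P xs then 1 else 0))" using tr_sub[OF tr_const assms] .
  then show ?thesis by (rule tr_cong) auto
qed

lemma tr_eq: assumes "TR k f" "TR k g" shows "TR k (\<lambda>xs. if f xs = g xs then 1 else 0)"
proof -
  have "TR k (\<lambda>xs. if f xs \<le> g xs \<and> g xs \<le> f xs then 1 else 0)" using tr_and[OF tr_le[OF assms] tr_le[OF assms(2,1)]] .
  then show ?thesis by (rule tr_cong) auto
qed

lemma rec_nat_mod: "rec_nat 0 (\<lambda>n a. if Suc a = y then 0 else Suc a) n = n mod y"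
  by (induction n) (auto simp: mod_Suc)

lemma rec_nat_div: "rec_nat 0 (\<lambda>n a. if Suc (n mod y) = y then Suc a else a) n = n div y"
proof (induction n)
  case 0 then show ?case by simp
next
  case (Suc n)
  have "Suc (n mod y) = y \<longleftrightarrow> Suc n mod y = 0 \<and> y \<noteq> 0" by (auto simp: mod_Suc)
  moreover have "y = 0 \<Longrightarrow> Suc n div y = n div y" by simp
  ultimately show ?case using Suc by (auto simp: div_Suc)
qed

lemma tr_suc: "TR k f \<Longrightarrow> TR k (\<lambda>xs. Suc (f xs))"
  using tr_comp1[OF tr_succ1] by simp

lemma rec_nat_mod': "(\<And>n a. G n a = (if Suc a = y then 0 else Suc a)) \<Longrightarrow> rec_nat 0 G n = n mod y"
proof -
  assume a: "\<And>n a. G n a = (if Suc a = y then 0 else Suc a)"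
  have "G = (\<lambda>n a. if Suc a = y then 0 else Suc a)" by (intro ext) (rule a)
  then show ?thesis using rec_nat_mod by simp
qed
lemma rec_nat_div': "(\<And>n a. G n a = (if Suc (n mod y) = y then Suc a else a)) \<Longrightarrow> rec_nat 0 G n = n div y"
proof -
  assume a: "\<And>n a. G n a = (if Suc (n mod y) = y then Suc a else a)"
  have "G = (\<lambda>n a. if Suc (n mod y) = y then Suc a else a)" by (intro ext) (rule a)
  then show ?thesis using rec_nat_div by simp
qed

lemma tr_mod2: "TR 2 (\<lambda>xs. xs ! 0 mod xs ! 1)"
proof -
  have "TR 3 (\<lambda>xs. if Suc (xs ! 1) = xs ! 2 then 0 else Suc (xs ! 1))"
    using tr_ifP[OF tr_eq[OF tr_suc[OF tr_proj[of 1 3]] tr_proj[of 2 3]]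
       tr_const[of 3 0] tr_suc[OF tr_proj[of 1 3]]]
    by simp
  then have "TR (Suc (Suc (Suc 0))) (\<lambda>xs. if Suc (xs ! 1) = xs ! 2 then 0 else Suc (xs ! 1))"
    by (simp only: numeral_3_eq_3)
  from tr_prec[OF tr_const[of "Suc 0" 0] this]
  show ?thesis
    by (rule tr_cong') (auto dest!: len2 simp: rec_nat_mod' nth_Cons')
qed

lemma tr_mod: "TR k f \<Longrightarrow> TR k g \<Longrightarrow> TR k (\<lambda>xs. f xs mod g xs)"
  using tr_comp2[OF tr_mod2] by simp

lemma tr_div2: "TR 2 (\<lambda>xs. xs ! 0 div xs ! 1)"
proof -
  have "TR 3 (\<lambda>xs. if Suc (xs ! 0 mod xs ! 2) = xs ! 2 then Suc (xs ! 1) else xs ! 1)"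
    using tr_ifP[OF tr_eq[OF tr_suc[OF tr_mod[OF tr_proj[of 0 3] tr_proj[of 2 3]]] tr_proj[of 2 3]]
       tr_suc[OF tr_proj[of 1 3]] tr_proj[of 1 3]]
    by simp
  then have "TR (Suc (Suc (Suc 0))) (\<lambda>xs. if Suc (xs ! 0 mod xs ! 2) = xs ! 2 then Suc (xs ! 1) else xs ! 1)"
    by (simp only: numeral_3_eq_3)
  from tr_prec[OF tr_const[of "Suc 0" 0] this]
  show ?thesis
    by (rule tr_cong') (auto dest!: len2 simp: rec_nat_div' nth_Cons')
qed

lemma tr_div: "TR k f \<Longrightarrow> TR k g \<Longrightarrow> TR k (\<lambda>xs. f xs div g xs)"
  using tr_comp2[OF tr_div2] by simp

lemma tr_shift: assumes "TR (Suc k) f" shows "TR (Suc (Suc k)) (\<lambda>zs. f (zs ! 0 # drop 2 zs))"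
proof -
  let ?fs = "(\<lambda>zs. zs ! 0) # map (\<lambda>j zs. zs ! (j + 2)) [0..<k]"
  have "TR (Suc (Suc k)) (\<lambda>zs. f (map (\<lambda>g. g zs) ?fs))"
    by (rule tr_comp) (use assms in \<open>auto intro: tr_proj\<close>)
  then show ?thesis
  proof (rule tr_cong)
    fix zs :: "nat list" assume "length zs = Suc (Suc k)"
    then have "map (\<lambda>g. g zs) ?fs = zs ! 0 # drop 2 zs"
      by (auto intro!: nth_equalityI simp: nth_Cons split: nat.split)
    then show "f (map (\<lambda>g. g zs) ?fs) = f (zs ! 0 # drop 2 zs)" by simp
  qed
qed

lemma tr_subst: assumes "TR (Suc k) H" "TR k n" shows "TR k (\<lambda>xs. H (n xs # xs))"
proof -
  let ?fs = "n # map (\<lambda>j xs. xs ! j) [0..<k]"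
  have "TR k (\<lambda>xs. H (map (\<lambda>g. g xs) ?fs))"
    by (rule tr_comp) (use assms in \<open>auto intro: tr_proj\<close>)
  then show ?thesis
  proof (rule tr_cong)
    fix xs :: "nat list" assume "length xs = k"
    then have "map (\<lambda>g. g xs) ?fs = n xs # xs"
      by (auto intro!: nth_equalityI simp: nth_Cons split: nat.split)
    then show "H (map (\<lambda>g. g xs) ?fs) = H (n xs # xs)" by simp
  qed
qed

lemma rec_nat_sum: "rec_nat 0 (\<lambda>n a. a + f (n # ys)) m = (\<Sum>i<m. f (i # ys))"
  by (induction m) auto

lemma tr_bsum: assumes "TR (Suc k) f" "TR k n" shows "TR k (\<lambda>xs. \<Sum>i<n xs. f (i # xs))"
proof -
  have "TR (Suc (Suc k)) (\<lambda>zs. zs ! 1 + f (zs ! 0 # drop 2 zs))"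
    by (rule tr_add[OF tr_proj tr_shift[OF assms(1)]]) simp
  from tr_prec[OF tr_const[of k 0] this]
  have "TR (Suc k) (\<lambda>xs. \<Sum>i<hd xs. f (i # tl xs))"
    by (rule tr_cong) (simp add: rec_nat_sum)
  from tr_subst[OF this assms(2)] show ?thesis by simp
qed

lemma tr_setsum: "finite I \<Longrightarrow> (\<forall>i\<in>I. TR k (f i)) \<Longrightarrow> TR k (\<lambda>xs. \<Sum>i\<in>I. f i xs)"
proof (induction I rule: finite_induct)
  case empty then show ?case by (simp add: tr_const)
next
  case (insert x F)
  have "TR k (\<lambda>xs. f x xs + (\<Sum>i\<in>F. f i xs))" by (rule tr_add) (use insert in auto)
  then show ?case using insert(1,2) by simp
qed

lemma decoder_pr:
  assumes c: "TR 1 (\<lambda>xs. c (xs ! 0))" and inj: "inj c"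
  shows "partial_recursive1 (\<lambda>n. if \<exists>x. c x = n then Some (THE x. c x = n) else None)"
proof -
  have "TR 2 (\<lambda>ys. if c (ys ! 0) = ys ! 1 then 0 else 1)"
    using tr_ifP[OF tr_eq[OF tr_comp1[OF c tr_proj[of 0 2]] tr_proj[of 1 2]] tr_const tr_const] by simp
  then obtain h where h: "\<forall>ys. length ys = 2 \<longrightarrow> eval h ys (if c (ys ! 0) = ys ! 1 then 0 else 1)"
    unfolding total_recursive_def by blast
  have hv: "eval h [y, n] v \<longleftrightarrow> v = (if c y = n then 0 else 1)" for y n v
    using h[rule_format, of "[y, n]"] eval_det by auto
  have key: "eval (Mn h) [n] y \<longleftrightarrow> c y = n" for n y
  proof
    assume "eval (Mn h) [n] y"
    then have "eval h [y, n] 0" by (auto elim: MnE)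
    then show "c y = n" using hv by (auto split: if_splits)
  next
    assume cy: "c y = n"
    show "eval (Mn h) [n] y"
    proof (rule eval_Mn)
      show "eval h [y, n] 0" using hv cy by simp
      show "\<forall>m<y. \<exists>v. eval h [m, n] v \<and> v > 0"
      proof (intro allI impI)
        fix m assume "m < y"
        then have "c m \<noteq> n" using cy inj by (auto dest: injD)
        then show "\<exists>v. eval h [m, n] v \<and> v > 0" using hv by (intro exI[of _ 1]) simp
      qed
    qed
  qed
  show ?thesis unfolding partial_recursive1_def
  proof (intro exI allI)
    fix n y
    show "((if \<exists>x. c x = n then Some (THE x. c x = n) else None) = Some y) = eval (Mn h) [n] y"
      unfolding key
    proof
      assume a: "(if \<exists>x. c x = n then Some (THE x. c x = n) else None) = Some y"
      then obtain x where x: "c x = n" by (auto split: if_splits)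
      have u: "\<And>z. c z = n \<Longrightarrow> z = x" using x inj by (metis injD)
      have "(THE x. c x = n) = x" using x u by (rule the_equality)
      moreover have "\<exists>x. c x = n" using x by blast
      ultimately have "x = y" using a by simp
      then show "c y = n" using x by simp
    next
      assume x: "c y = n"
      have u: "\<And>z. c z = n \<Longrightarrow> z = y" using x inj by (metis injD)
      have "(THE x. c x = n) = y" using x u by (rule the_equality)
      then show "(if \<exists>x. c x = n then Some (THE x. c x = n) else None) = Some y" using x by auto
    qed
  qed
qed

lemma str_code_inj: "inj str_code"
proof (rule injI)
  fix xs ys show "str_code xs = str_code ys \<Longrightarrow> xs = ys"
  proof (induction xs arbitrary: ys)
    case Nil then show ?case by (cases ys) (auto split: if_splits)
  next
    case (Cons a xs)
    then obtain b ys' where ys: "ys = b # ys'" by (cases ys) (auto split: if_splits)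
    have e: "2 * str_code xs + (if a then 2 else 1) = 2 * str_code ys' + (if b then 2 else 1)"
      using Cons.prems ys by simp
    have "(2 * str_code xs + (if a then 2 else 1)) mod 2 = (2 * str_code ys' + (if b then 2 else 1)) mod 2"
      using e by simp
    then have "a = b" by (cases a; cases b) simp_all
    then have "str_code xs = str_code ys'" using e by (cases a) auto
    then show ?case using Cons.IH ys \<open>a = b\<close> by auto
  qed
qed

lemma str_code_surj: "surj str_code"
proof -
  have "\<exists>xs. str_code xs = n" for n
  proof (induction n rule: less_induct)
    case (less n)
    show ?case
    proof (cases "n = 0")
      case True then show ?thesis by (auto intro: exI[of _ "[]"])
    next
      case False
      show ?thesis
      proof (cases "even n")
        case True
        define k where "k = n div 2 - 1"
        have k: "n = 2 * k + 2" using True False unfolding k_def by (elim evenE) simp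
        then obtain xs where "str_code xs = k" using less by fastforce
        then show ?thesis using k by (auto intro: exI[of _ "True # xs"])
      next
        case F: False
        define k where "k = n div 2"
        have k: "n = 2 * k + 1" using F unfolding k_def by (elim oddE) simp
        then obtain xs where "str_code xs = k" using less by fastforce
        then show ?thesis using k by (auto intro: exI[of _ "False # xs"])
      qed
    qed
  qed
  then have ex: "\<And>n. \<exists>xs. str_code xs = n" .
  show ?thesis by (rule surjI[where f="\<lambda>n. SOME xs. str_code xs = n"]) (rule someI_ex, rule ex)
qed

lemma tr_even: "TR k f \<Longrightarrow> TR k (\<lambda>xs. if even (f xs) then 1 else 0)"
proof -
  assume f: "TR k f"
  have "TR k (\<lambda>xs. if f xs mod 2 = 0 then 1 else 0)" by (rule tr_eq[OF tr_mod[OF f tr_const] tr_const])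
  then show ?thesis by (rule tr_cong) auto
qed

lemma tr_bsum1: assumes "TR 2 (\<lambda>ys. B (ys!0) (ys!1))" "TR 1 (\<lambda>xs. N (xs!0))"
  shows "TR 1 (\<lambda>xs. \<Sum>i<N (xs!0). B i (xs!0))"
proof -
  have a: "TR (Suc 1) (\<lambda>ys. B (ys!0) (ys!1))" using assms(1) by (simp add: numeral_2_eq_2)
  show ?thesis using tr_bsum[OF a assms(2)] by simp
qed

lemma tr_x: "TR 1 (\<lambda>xs. xs ! 0)" by (rule tr_proj) simp

lemmas tr_intros = tr_le tr_eq tr_and tr_not tr_even tr_ifP tr_add tr_mult tr_sub tr_div tr_mod tr_pow tr_suc tr_proj tr_const

definition pdk :: "nat \<Rightarrow> nat" where
  "pdk n = (\<Sum>j<n. if Suc j * Suc (Suc j) div 2 \<le> n then 1 else 0)"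
definition pd1 :: "nat \<Rightarrow> nat" where "pd1 n = n - pdk n * Suc (pdk n) div 2"
definition pd2 :: "nat \<Rightarrow> nat" where "pd2 n = pdk n - pd1 n"

lemma tr_pdk: "TR k h \<Longrightarrow> TR k (\<lambda>xs. pdk (h xs))"
proof -
  assume h: "TR k h"
  have "TR 2 (\<lambda>ys. if Suc (ys!0) * Suc (Suc (ys!0)) div 2 \<le> ys!1 then 1 else 0)"
    by (intro tr_intros) simp_all
  from tr_bsum1[OF this tr_x]
  have "TR 1 (\<lambda>xs. pdk (xs ! 0))" unfolding pdk_def by simp
  from tr_comp1[OF this h] show ?thesis by simp
qed

lemma tr_pd1: "TR k h \<Longrightarrow> TR k (\<lambda>xs. pd1 (h xs))"
  unfolding pd1_def by (intro tr_intros tr_pdk)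
lemma tr_pd2: "TR k h \<Longrightarrow> TR k (\<lambda>xs. pd2 (h xs))"
  unfolding pd2_def by (intro tr_intros tr_pdk tr_pd1)

lemma sum_ind_less: "k \<le> n \<Longrightarrow> (\<Sum>j<n. if j < k then 1 else 0 :: nat) = k"
  by (induction n) (auto simp: less_Suc_eq_le)

lemma pd_correct: "prod_decode n = (pd1 n, pd2 n)"
proof -
  obtain a b where ab: "prod_decode n = (a, b)" by (cases "prod_decode n")
  have n: "n = triangle (a + b) + a" using prod_decode_inverse[of n] ab by (simp add: prod_encode_def)
  have tri: "Suc j * Suc (Suc j) div 2 = triangle (Suc j)" for j by (simp add: triangle_def)
  have mono: "i \<le> j \<Longrightarrow> triangle i \<le> triangle j" for i j
    by (induction j) (auto simp: le_Suc_eq)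
  have iff: "triangle (Suc j) \<le> n \<longleftrightarrow> j < a + b" for j
  proof
    assume "triangle (Suc j) \<le> n"
    show "j < a + b"
    proof (rule ccontr)
      assume "\<not> j < a + b"
      then have "triangle (Suc (a + b)) \<le> triangle (Suc j)" by (intro mono) simp
      then show False using \<open>triangle (Suc j) \<le> n\<close> n by simp
    qed
  next
    assume "j < a + b" then have "triangle (Suc j) \<le> triangle (a + b)" by (intro mono) simp
    then show "triangle (Suc j) \<le> n" using n by simp
  qed
  have le: "a + b \<le> n"
  proof -
    have "k \<le> triangle k" for k by (induction k) auto
    then show ?thesis using n by (metis le_add1 order_trans)
  qed
  have "pdk n = a + b" unfolding pdk_def tri iff using le by (rule sum_ind_less)
  then show ?thesis unfolding pd1_def pd2_def using ab n by (simp add: triangle_def)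
qed

fun bits :: "nat \<Rightarrow> nat \<Rightarrow> bool list" where
  "bits 0 a = []"
| "bits (Suc m) a = odd (a div 2 ^ m) # bits m a"

lemma length_bits[simp]: "length (bits m a) = m"
  by (induction m) auto

lemma div_comm2: "(a::nat) div 2 ^ m div 2 ^ d = a div 2 ^ d div 2 ^ m"
  by (metis div_mult2_eq mult.commute)

lemma bits_append: "bits (d + m) a = bits m (a div 2 ^ d) @ bits d a"
  by (induction m) (auto simp: power_add div_mult2_eq[symmetric] mult.commute)

lemma bits_inj: "bits m a = bits m c \<Longrightarrow> a mod 2 ^ m = c mod 2 ^ m"
proof (induction m)
  case 0 then show ?case by simp
next
  case (Suc m)
  then have o: "odd (a div 2 ^ m) = odd (c div 2 ^ m)" and r: "a mod 2 ^ m = c mod 2 ^ m" by auto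
  have "a div 2 ^ m mod 2 = c div 2 ^ m mod 2" using o by (simp add: mod2_eq_if)
  have e: "x mod 2 ^ Suc m = 2 ^ m * (x div 2 ^ m mod 2) + x mod 2 ^ m" for x :: nat
    using mod_mult2_eq[of x "2 ^ m" 2] by (simp add: mult.commute)
  show ?case unfolding e[of a] e[of c] using r \<open>a div 2 ^ m mod 2 = c div 2 ^ m mod 2\<close> by simp
qed

lemma bits_prefix:
  assumes a: "a < 2 ^ m" and a': "a' < 2 ^ m'" and p: "prefix (bits m a) (bits m' a')"
  shows "m \<le> m' \<and> a = a' div 2 ^ (m' - m)"
proof -
  have le: "m \<le> m'" using prefix_length_le[OF p] by simp
  define d where "d = m' - m"
  have m': "m' = d + m" using le d_def by simp
  have "prefix (bits m a) (bits m (a' div 2 ^ d) @ bits d a')" using p m' bits_append by metis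
  then have "bits m a = bits m (a' div 2 ^ d)"
    by (metis append_eq_append_conv length_bits prefix_def prefix_length_prefix prefix_order.refl)
  then have "a mod 2 ^ m = (a' div 2 ^ d) mod 2 ^ m" by (rule bits_inj)
  moreover have "a' div 2 ^ d < 2 ^ m" using a' m' by (simp add: div_less_iff_less_mult power_add mult.commute)
  ultimately have "a = a' div 2 ^ d" using a by simp
  then show ?thesis using le d_def by simp
qed

definition scf :: "nat \<Rightarrow> nat \<Rightarrow> nat" where
  "scf m a = rec_nat 0 (\<lambda>n acc. 2 * acc + (a div 2 ^ n mod 2 + 1)) m"

lemma scf_correct: "str_code (bits m a) = scf m a"
  unfolding scf_def
  by (induction m) (auto simp: odd_iff_mod_2_eq_one)

lemma tr_scf: assumes "TR k m" "TR k a" shows "TR k (\<lambda>xs. scf (m xs) (a xs))"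
proof -
  have "TR 3 (\<lambda>zs. 2 * zs ! 1 + (zs ! 2 div 2 ^ zs ! 0 mod 2 + 1))"
    by (intro tr_intros) simp_all
  then have "TR (Suc (Suc 1)) (\<lambda>zs. 2 * zs ! 1 + (zs ! 2 div 2 ^ zs ! 0 mod 2 + 1))"
    by (simp only: numeral_3_eq_3 One_nat_def)
  from tr_prec[OF tr_const[of 1 0] this]
  have "TR 2 (\<lambda>ys. scf (ys ! 0) (ys ! 1))"
  proof (rule tr_cong')
    fix xs :: "nat list" assume "length xs = 2"
    then obtain u v where xs: "xs = [u, v]" by (auto dest: len2)
    have "(\<lambda>n a. 2 * (n # a # tl xs) ! 1 + ((n # a # tl xs) ! 2 div 2 ^ (n # a # tl xs) ! 0 mod 2 + 1))
       = (\<lambda>n acc. 2 * acc + (v div 2 ^ n mod 2 + 1))" using xs by (auto simp: numeral_2_eq_2)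
    then show "rec_nat 0 (\<lambda>n a. 2 * (n # a # tl xs) ! 1 + ((n # a # tl xs) ! 2 div 2 ^ (n # a # tl xs) ! 0 mod 2 + 1)) (hd xs)
         = scf (xs ! 0) (xs ! 1)" unfolding scf_def using xs by simp
  qed simp
  from tr_comp2[OF this assms] show ?thesis by simp
qed

definition SF_Z :: "(nat \<Rightarrow> nat) \<Rightarrow> (nat \<Rightarrow> nat) \<Rightarrow> nat \<Rightarrow> nat" where
  "SF_Z l E x = (\<Sum>t<x. 2 ^ (E x - l t))"
definition SF_a :: "(nat \<Rightarrow> nat) \<Rightarrow> (nat \<Rightarrow> nat) \<Rightarrow> nat \<Rightarrow> nat" where
  "SF_a l E x = (SF_Z l E x + 2 ^ (E x - Suc (l x)) - 1) div 2 ^ (E x - Suc (l x))"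
definition cw :: "(nat \<Rightarrow> nat) \<Rightarrow> (nat \<Rightarrow> nat) \<Rightarrow> nat \<Rightarrow> bool list" where
  "cw l E x = bits (Suc (l x)) (SF_a l E x)"

lemma ceil_div: assumes "(q::nat) > 0" shows "Z \<le> (Z + q - 1) div q * q" "(Z + q - 1) div q * q < Z + q"
proof -
  have e: "(Z + q - 1) div q * q + (Z + q - 1) mod q = Z + q - 1" by simp
  have "(Z + q - 1) mod q < q" using assms by simp
  then show "Z \<le> (Z + q - 1) div q * q" using e assms by linarith
  show "(Z + q - 1) div q * q < Z + q" using e assms by linarith
qed

locale SFloc =
  fixes l E :: "nat \<Rightarrow> nat"
  assumes hE1: "\<And>x t. t < x \<Longrightarrow> l t \<le> E x"
    and hE2: "\<And>x. Suc (l x) \<le> E x"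
    and hK: "\<And>x. (\<Sum>t\<le>x. (1/2::real) ^ l t) \<le> 1"
begin

definition S :: "nat \<Rightarrow> real" where "S x = (\<Sum>t<x. (1/2::real) ^ l t)"

lemma Z_real: "real (SF_Z l E x) = S x * 2 ^ E x"
proof -
  have "real (2 ^ (E x - l t)) = (1/2) ^ l t * 2 ^ E x" if "t < x" for t
  proof -
    have "real (2 ^ (E x - l t)) = (2::real) ^ (E x - l t)" by simp
    also have "\<dots> = 2 ^ E x / 2 ^ l t" by (rule power_diff) (use hE1[OF that] in simp_all)
    finally show ?thesis by (simp add: power_one_over)
  qed
  then show ?thesis unfolding SF_Z_def S_def by (simp add: sum_distrib_right)
qed

lemma S_step: "t < u \<Longrightarrow> S t + (1/2) ^ l t \<le> S u"
proof -
  assume "t < u"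
  have "S t + (1/2) ^ l t = (\<Sum>i<Suc t. (1/2::real) ^ l i)" unfolding S_def by simp
  also have "\<dots> \<le> S u" unfolding S_def
    by (rule sum_mono2) (use \<open>t < u\<close> in auto)
  finally show ?thesis .
qed

lemma S_le: "S x + (1/2) ^ l x \<le> 1"
proof -
  have "S x + (1/2) ^ l x = (\<Sum>t\<le>x. (1/2::real) ^ l t)" unfolding S_def by (simp add: lessThan_Suc_atMost[symmetric])
  then show ?thesis using hK by simp
qed

definition v :: "nat \<Rightarrow> real" where "v x = real (SF_a l E x) / 2 ^ Suc (l x)"

lemma v_bounds: "S x \<le> v x" "v x < S x + (1/2) ^ Suc (l x)"
proof -
  define d where "d = E x - Suc (l x)"
  have E: "E x = d + Suc (l x)" using hE2[of x] d_def by simp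
  have q: "(2::nat) ^ d > 0" by simp
  note c = ceil_div[OF q, of "SF_Z l E x"]
  have a: "SF_a l E x = (SF_Z l E x + 2 ^ d - 1) div 2 ^ d" unfolding SF_a_def d_def ..
  have "real (SF_Z l E x) \<le> real (SF_a l E x * 2 ^ d)" using c(1) unfolding a[symmetric]
    by (simp only: of_nat_le_iff)
  then have c1: "real (SF_Z l E x) \<le> real (SF_a l E x) * 2 ^ d" by simp
  have "real (SF_a l E x * 2 ^ d) < real (SF_Z l E x + 2 ^ d)" using c(2) unfolding a[symmetric]
    by (simp only: of_nat_less_iff)
  then have c2: "real (SF_a l E x) * 2 ^ d < real (SF_Z l E x) + 2 ^ d" by simp
  have pE: "(2::real) ^ E x = 2 ^ d * 2 ^ Suc (l x)" unfolding E by (simp add: power_add)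
  show "S x \<le> v x" using c1 unfolding Z_real v_def pE
    by (simp add: field_simps)
  have "real (SF_a l E x) * 2 ^ d < (S x * 2 ^ Suc (l x) + 1) * 2 ^ d"
    using c2 unfolding Z_real pE by (simp add: algebra_simps)
  then have "real (SF_a l E x) < S x * 2 ^ Suc (l x) + 1"
    by (rule mult_less_cancel_right_pos[THEN iffD1, rotated]) simp
  then show "v x < S x + (1/2) ^ Suc (l x)" unfolding v_def
    by (simp add: field_simps power_one_over)
qed

lemma a_bound: "SF_a l E x < 2 ^ Suc (l x)"
proof -
  have "v x + (1/2) ^ Suc (l x) < S x + (1/2) ^ l x" using v_bounds(2)[of x] by simp
  also have "\<dots> \<le> 1" by (rule S_le)
  finally have "(real (SF_a l E x) + 1) / 2 ^ Suc (l x) < 1" unfolding v_def by (simp add: field_simps power_one_over)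
  then have "real (SF_a l E x) + 1 < 2 ^ Suc (l x)" by (simp add: field_simps)
  then have "real (SF_a l E x) < 2 ^ Suc (l x)" by simp
  then have "real (SF_a l E x) < real ((2::nat) ^ Suc (l x))" by simp
  then show ?thesis by (simp only: of_nat_less_iff)
qed

lemma prefix_v: assumes p: "prefix (cw l E x) (cw l E y)"
  shows "v x \<le> v y" "v y < v x + (1/2) ^ Suc (l x)"
proof -
  have bp: "Suc (l x) \<le> Suc (l y) \<and> SF_a l E x = SF_a l E y div 2 ^ (Suc (l y) - Suc (l x))"
    using bits_prefix[OF a_bound a_bound p[unfolded cw_def]] .
  define dd where "dd = Suc (l y) - Suc (l x)"
  have my: "Suc (l y) = dd + Suc (l x)" using bp dd_def by simp
  have ax: "SF_a l E x = SF_a l E y div 2 ^ dd" using bp dd_def by simp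
  have n1: "SF_a l E x * 2 ^ dd \<le> SF_a l E y" unfolding ax by (rule div_times_less_eq_dividend)
  have n2: "SF_a l E y < (SF_a l E x + 1) * 2 ^ dd"
  proof -
    have e: "SF_a l E y div 2 ^ dd * 2 ^ dd + SF_a l E y mod 2 ^ dd = SF_a l E y" by (rule div_mult_mod_eq)
    have m: "SF_a l E y mod 2 ^ dd < 2 ^ dd" by simp
    have "SF_a l E y < SF_a l E y div 2 ^ dd * 2 ^ dd + 2 ^ dd" using e m by linarith
    then show ?thesis unfolding ax by (simp add: algebra_simps)
  qed
  have "real (SF_a l E x * 2 ^ dd) \<le> real (SF_a l E y)" using n1 by (simp only: of_nat_le_iff)
  then have r1: "real (SF_a l E x) * 2 ^ dd \<le> real (SF_a l E y)" by simp
  have "real (SF_a l E y) < real ((SF_a l E x + 1) * 2 ^ dd)" using n2 by (simp only: of_nat_less_iff)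
  then have r2: "real (SF_a l E y) < (real (SF_a l E x) + 1) * 2 ^ dd" by (simp add: algebra_simps)
  have pm: "(2::real) ^ Suc (l y) = 2 ^ dd * 2 ^ Suc (l x)" unfolding my by (simp add: power_add)
  show "v x \<le> v y" using r1 unfolding v_def pm by (simp add: field_simps)
  show "v y < v x + (1/2) ^ Suc (l x)" using r2 unfolding v_def pm by (simp add: field_simps power_one_over)
qed

lemma cw_prefix_free: "x \<noteq> y \<Longrightarrow> \<not> prefix (cw l E x) (cw l E y)"
proof
  assume ne: "x \<noteq> y" and p: "prefix (cw l E x) (cw l E y)"
  note pv = prefix_v[OF p]
  have h: "(1/2::real) ^ Suc (l z) = (1/2) ^ l z / 2" for z by simp
  consider "x < y" | "y < x" using ne by linarith
  then show False
  proof cases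
    case 1
    have "S x + (1/2) ^ l x \<le> S y" by (rule S_step[OF 1])
    then show False using pv v_bounds[of x] v_bounds[of y] h[of x] by linarith
  next
    case 2
    have "S y + (1/2) ^ l y \<le> S x" by (rule S_step[OF 2])
    moreover have "(1/2::real) ^ Suc (l y) > 0" by simp
    ultimately show False using pv v_bounds[of x] v_bounds[of y] h[of y] by linarith
  qed
qed

lemma cw_inj: "inj (cw l E)"
  by (rule injI) (metis cw_prefix_free prefix_order.refl)

end

definition sesq :: "complex^'n^'n \<Rightarrow> complex^'n \<Rightarrow> complex^'n \<Rightarrow> complex" where
  "sesq A x y = (\<Sum>i\<in>UNIV. \<Sum>j\<in>UNIV. cnj (x$i) * A$i$j * y$j)"

lemma psd_sesq: "psd A \<longleftrightarrow> hermitian A \<and> (\<forall>x. 0 \<le> Re (sesq A x x))"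
  unfolding psd_def sesq_def matrix_vector_mult_def
  by (simp add: sum_distrib_left mult.assoc)

lemma herm_entry: "hermitian A \<Longrightarrow> A$j$i = cnj (A$i$j)"
  unfolding hermitian_def adjoint_mat_def
  by (metis (no_types, lifting) complex_cnj_cnj vec_lambda_beta)

lemma trace_mult: "trace (A ** B) = (\<Sum>i\<in>UNIV. \<Sum>k\<in>UNIV. A$i$k * B$k$i)"
  unfolding trace_def matrix_matrix_mult_def by simp

definition e1 :: "'n \<Rightarrow> complex \<Rightarrow> complex^'n" where "e1 i u = (\<chi> k. if k = i then u else 0)"
lemma e1_nth: "e1 i u $ k = (if k = i then u else 0)" by (simp add: e1_def)

lemma sesq_e1_left: "sesq A (e1 i u) y = cnj u * (\<Sum>j\<in>UNIV. A$i$j * y$j)"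
proof -
  have "sesq A (e1 i u) y = (\<Sum>i'\<in>UNIV. if i' = i then (\<Sum>j\<in>UNIV. cnj u * A$i$j * y$j) else 0)"
    unfolding sesq_def by (rule sum.cong) (auto simp: e1_nth)
  also have "\<dots> = (\<Sum>j\<in>UNIV. cnj u * A$i$j * y$j)" by simp
  finally show ?thesis by (simp add: sum_distrib_left mult.assoc)
qed

lemma sesq_e1_right: "sesq A x (e1 j w) = (\<Sum>k\<in>UNIV. cnj (x$k) * A$k$j) * w"
proof -
  have "sesq A x (e1 j w) = (\<Sum>k\<in>UNIV. cnj (x$k) * A$k$j * w)"
    unfolding sesq_def
  proof (rule sum.cong)
    fix k
    have "(\<Sum>j'\<in>UNIV. cnj (x$k) * A$k$j' * e1 j w $ j') = (\<Sum>j'\<in>UNIV. if j' = j then cnj (x$k) * A$k$j * w else 0)"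
      by (rule sum.cong) (auto simp: e1_nth)
    also have "\<dots> = cnj (x$k) * A$k$j * w" by simp
    finally show "(\<Sum>j'\<in>UNIV. cnj (x$k) * A$k$j' * e1 j w $ j') = cnj (x$k) * A$k$j * w" .
  qed simp
  then show ?thesis by (simp add: sum_distrib_right)
qed

lemma sesq_e1e1: "sesq A (e1 i u) (e1 j w) = cnj u * A$i$j * w"
proof -
  have "(\<Sum>j'\<in>UNIV. A$i$j' * e1 j w $ j') = (\<Sum>j'\<in>UNIV. if j' = j then A$i$j * w else 0)"
    by (rule sum.cong) (auto simp: e1_nth)
  also have "\<dots> = A$i$j * w" by simp
  finally show ?thesis unfolding sesq_e1_left by simp
qed

lemma sesq_add_left: "sesq A (x + y) z = sesq A x z + sesq A y z"
  unfolding sesq_def by (simp add: distrib_left distrib_right sum.distrib)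
lemma sesq_add_right: "sesq A x (y + z) = sesq A x y + sesq A x z"
  unfolding sesq_def by (simp add: distrib_left distrib_right sum.distrib)

lemma sesq_e2: "sesq A (e1 i u + e1 j w) (e1 i u + e1 j w) =
   cnj u * A$i$i * u + cnj u * A$i$j * w + cnj w * A$j$i * u + cnj w * A$j$j * w"
  by (simp add: sesq_add_left sesq_add_right sesq_e1e1)

lemma psd_diag: assumes "psd A" shows "Im (A$i$i) = 0" "0 \<le> Re (A$i$i)"
proof -
  have h: "hermitian A" using assms psd_def by blast
  have "A$i$i = cnj (A$i$i)" using herm_entry[OF h] by blast
  then show "Im (A$i$i) = 0" by (metis cnj.simps(2) neg_equal_zero)
  have "0 \<le> Re (sesq A (e1 i 1) (e1 i 1))" using assms psd_sesq by blast
  then show "0 \<le> Re (A$i$i)" by (simp add: sesq_e1e1)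
qed

lemma psd_diag_real: "psd A \<Longrightarrow> A$i$i = complex_of_real (Re (A$i$i))"
  using psd_diag(1)[of A i] by (simp add: complex_eq_iff)

lemma psd_offdiag: assumes "psd A" shows "cmod (A$i$j) \<le> (Re (A$i$i) + Re (A$j$j)) / 2"
proof (cases "i = j")
  case True
  then show ?thesis using psd_diag[OF assms, of i] by (simp add: cmod_eq_Re)
next
  case ne: False
  show ?thesis
  proof (cases "A$i$j = 0")
    case True then show ?thesis using psd_diag(2)[OF assms, of i] psd_diag(2)[OF assms, of j] by simp
  next
    case False
    define c where "c = A$i$j"
    define m where "m = cmod c"
    have m: "m > 0" using False unfolding m_def c_def by simp
    define z where "z = - cnj c / complex_of_real m"
    have h: "hermitian A" using assms psd_def by blast
    have ji: "A$j$i = cnj c" unfolding c_def by (rule herm_entry[OF h])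
    have cc: "c * cnj c = complex_of_real (m^2)" unfolding m_def by (rule complex_norm_square[symmetric])
    have "c * z = - (c * cnj c / complex_of_real m)" unfolding z_def by simp
    also have "\<dots> = - complex_of_real (m^2 / m)" unfolding cc by simp
    also have "m^2 / m = m" using m by (simp add: power2_eq_square)
    finally have cz: "c * z = - complex_of_real m" .
    have zc: "cnj z * cnj c = - complex_of_real m"
      using arg_cong[OF cz, of cnj] by (simp add: mult.commute)
    have nz: "cmod z = 1" unfolding z_def using m by (simp add: norm_divide m_def)
    have zz: "cnj z * z = 1"
    proof -
      have "z * cnj z = complex_of_real ((cmod z)^2)" by (rule complex_norm_square[symmetric])
      then show ?thesis using nz by (simp add: mult.commute)
    qed
    have "sesq A (e1 i 1 + e1 j z) (e1 i 1 + e1 j z) = A$i$i + c * z + cnj z * cnj c + A$j$j * (cnj z * z)"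
      unfolding sesq_e2 ji c_def by (simp add: mult.commute mult.left_commute)
    also have "\<dots> = A$i$i + A$j$j - 2 * complex_of_real m" unfolding cz zc zz by simp
    finally have "Re (sesq A (e1 i 1 + e1 j z) (e1 i 1 + e1 j z)) = Re (A$i$i) + Re (A$j$j) - 2 * m" by simp
    moreover have "0 \<le> Re (sesq A (e1 i 1 + e1 j z) (e1 i 1 + e1 j z))" using assms psd_sesq by blast
    ultimately show ?thesis unfolding m_def c_def by simp
  qed
qed


lemma density_psd: "density_matrix \<rho> \<Longrightarrow> psd \<rho>"
  unfolding density_matrix_def loewner_le_def by simp

lemma density_diag_le1: assumes d: "density_matrix \<rho>" shows "Re (\<rho>$i$i) \<le> 1"
proof -
  have p: "psd \<rho>" using density_psd[OF d] .
  have "Re (trace \<rho>) = 1" using d unfolding density_matrix_def by simp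
  then have s: "(\<Sum>k\<in>UNIV. Re (\<rho>$k$k)) = 1" unfolding trace_def by (simp add: Re_sum)
  have "Re (\<rho>$i$i) \<le> (\<Sum>k\<in>UNIV. Re (\<rho>$k$k))"
    by (rule member_le_sum) (auto intro: psd_diag(2)[OF p])
  then show ?thesis using s by simp
qed

lemma trace_upper:
  fixes \<rho> R :: "complex^'n^'n"
  assumes d: "density_matrix \<rho>" and R: "psd R"
  shows "Re (trace (\<rho> ** R)) \<le> real CARD('n) * (\<Sum>i\<in>UNIV. Re (R$i$i))"
proof -
  have p: "psd \<rho>" using density_psd[OF d] .
  have b1: "cmod (\<rho>$i$k) \<le> 1" for i k
    using psd_offdiag[OF p, of i k] density_diag_le1[OF d, of i] density_diag_le1[OF d, of k] by simp
  have "Re (trace (\<rho> ** R)) = (\<Sum>i\<in>UNIV. \<Sum>k\<in>UNIV. Re (\<rho>$i$k * R$k$i))"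
    unfolding trace_mult by (simp add: Re_sum)
  also have "\<dots> \<le> (\<Sum>i\<in>UNIV. \<Sum>k\<in>UNIV. (Re (R$k$k) + Re (R$i$i)) / 2)"
  proof (intro sum_mono)
    fix i k
    have "Re (\<rho>$i$k * R$k$i) \<le> cmod (\<rho>$i$k * R$k$i)" by (rule complex_Re_le_cmod)
    also have "\<dots> = cmod (\<rho>$i$k) * cmod (R$k$i)" by (rule norm_mult)
    also have "\<dots> \<le> 1 * cmod (R$k$i)" by (rule mult_right_mono[OF b1]) simp
    also have "\<dots> \<le> (Re (R$k$k) + Re (R$i$i)) / 2" using psd_offdiag[OF R, of k i] by simp
    finally show "Re (\<rho>$i$k * R$k$i) \<le> (Re (R$k$k) + Re (R$i$i)) / 2" .
  qed
  also have "\<dots> = real CARD('n) * (\<Sum>i\<in>UNIV. Re (R$i$i))"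
    by (simp add: sum.distrib sum_divide_distrib[symmetric] sum_distrib_left[symmetric] algebra_simps)
  finally show ?thesis .
qed


definition supp :: "complex^'n^'n \<Rightarrow> 'n set \<Rightarrow> bool" where
  "supp A S \<longleftrightarrow> (\<forall>k l. A$k$l \<noteq> 0 \<longrightarrow> k \<in> S \<and> l \<in> S)"

lemma psd_zero_row: assumes p: "psd A" and a: "A$i$i = 0" shows "A$i$l = 0"
proof (rule ccontr)
  assume c0: "A$i$l \<noteq> 0"
  then have ne: "i \<noteq> l" using a by auto
  define c where "c = A$i$l"
  have h: "hermitian A" using p psd_def by blast
  have li: "A$l$i = cnj c" unfolding c_def by (rule herm_entry[OF h])
  define n2 where "n2 = (cmod c)^2"
  have n2: "n2 > 0" using c0 unfolding n2_def c_def by simp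
  define t where "t = (Re (A$l$l) + 1) / (2 * n2)"
  define u where "u = - complex_of_real t * c"
  have cc: "c * cnj c = complex_of_real n2" unfolding n2_def by (rule complex_norm_square[symmetric])
  have e1': "cnj u * c = - complex_of_real (t * n2)"
    unfolding u_def using cc by (simp add: mult.commute mult.left_commute)
  have e2': "cnj c * u = - complex_of_real (t * n2)"
    unfolding u_def using cc by (simp add: mult.commute mult.left_commute)
  have "sesq A (e1 i u + e1 l 1) (e1 i u + e1 l 1) = cnj u * A$i$i * u + cnj u * c + cnj c * u + A$l$l"
    unfolding sesq_e2 li c_def by simp
  also have "\<dots> = A$l$l - complex_of_real (2 * t * n2)" unfolding a e1' e2' by simp
  finally have "Re (sesq A (e1 i u + e1 l 1) (e1 i u + e1 l 1)) = Re (A$l$l) - 2 * t * n2" by simp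
  also have "\<dots> = -1" unfolding t_def using n2 by (simp add: field_simps)
  finally show False using p psd_sesq by (metis neg_0_le_iff_le not_one_le_zero)
qed

lemma trace_zero: "supp A {} \<Longrightarrow> trace (A ** B) = 0"
  unfolding supp_def trace_mult by auto

lemma psd_trace_pos_ind:
  fixes B :: "complex^'n^'n"
  assumes B: "psd B" and fin: "finite S"
  shows "\<forall>A. psd A \<longrightarrow> supp A S \<longrightarrow> 0 \<le> Re (trace (A ** B))"
  using fin
proof (induction S rule: finite_induct)
  case empty show ?case
  proof (intro allI impI)
    fix A :: "complex^'n^'n" assume "supp A {}"
    then show "0 \<le> Re (trace (A ** B))" using trace_zero[of A B] by simp
  qed
next
  case (insert i S)
  show ?case
  proof (intro allI impI)
    fix A :: "complex^'n^'n" assume p: "psd A" and sA: "supp A (insert i S)"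
    have h: "hermitian A" using p psd_def by blast
    show "0 \<le> Re (trace (A ** B))"
    proof (cases "A$i$i = 0")
      case True
      have row: "A$i$l = 0" for l using psd_zero_row[OF p True] .
      have col: "A$k$i = 0" for k using herm_entry[OF h, of i k] row[of k] by simp
      have "supp A S" using sA row col unfolding supp_def by (metis insert_iff)
      then show ?thesis using insert.IH p by blast
    next
      case False
      define a where "a = Re (A$i$i)"
      have aa: "A$i$i = complex_of_real a" unfolding a_def by (rule psd_diag_real[OF p])
      have "a \<noteq> 0" using False aa by auto
      then have apos: "a > 0" using psd_diag(2)[OF p, of i] unfolding a_def by linarith
      define A' where "A' = (\<chi> k l. A$k$l - A$k$i * A$i$l / complex_of_real a)"
      have A'e: "A'$k$l = A$k$l - A$k$i * A$i$l / complex_of_real a" for k l unfolding A'_def by simp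
      have r0: "A'$i$l = 0" for l unfolding A'e aa using apos by simp
      have c0: "A'$k$i = 0" for k unfolding A'e aa using apos by simp
      have sA': "supp A' S"
        unfolding supp_def
      proof (intro allI impI)
        fix k l assume nz: "A'$k$l \<noteq> 0"
        have "k \<noteq> i" using nz r0 by auto
        moreover have "l \<noteq> i" using nz c0 by auto
        moreover have "A$k$l \<noteq> 0 \<or> A$k$i \<noteq> 0" using nz unfolding A'e by auto
        moreover have "A$k$l \<noteq> 0 \<or> A$i$l \<noteq> 0" using nz unfolding A'e by auto
        ultimately show "k \<in> S \<and> l \<in> S" using sA unfolding supp_def by blast
      qed
      have hA': "hermitian A'"
        unfolding hermitian_def adjoint_mat_def
      proof (intro vec_eq_iff[THEN iffD2] allI)
        fix k l
        show "(\<chi> i j. cnj (A' $ j $ i)) $ k $ l = A' $ k $ l"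
          unfolding A'e using herm_entry[OF h, of k l] herm_entry[OF h, of i l] herm_entry[OF h, of k i]
          by simp
      qed
      have sesqA': "sesq A' x x = sesq A x x - cnj (\<Sum>l\<in>UNIV. A$i$l * x$l) * (\<Sum>l\<in>UNIV. A$i$l * x$l) / complex_of_real a"
        for x
      proof -
        have r: "(\<Sum>k\<in>UNIV. cnj (x$k) * A$k$i) = cnj (\<Sum>l\<in>UNIV. A$i$l * x$l)"
          by (simp add: herm_entry[OF h, of i] mult.commute)
        have "sesq A' x x = (\<Sum>k\<in>UNIV. \<Sum>l\<in>UNIV. cnj (x$k) * A$k$l * x$l - cnj (x$k) * A$k$i * (A$i$l * x$l) / complex_of_real a)"
          unfolding sesq_def A'e by (simp add: algebra_simps)
        also have "\<dots> = sesq A x x - (\<Sum>k\<in>UNIV. \<Sum>l\<in>UNIV. cnj (x$k) * A$k$i * (A$i$l * x$l)) / complex_of_real a"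
          unfolding sesq_def by (simp add: sum_subtractf sum_divide_distrib)
        also have "(\<Sum>k\<in>UNIV. \<Sum>l\<in>UNIV. cnj (x$k) * A$k$i * (A$i$l * x$l)) = (\<Sum>k\<in>UNIV. cnj (x$k) * A$k$i) * (\<Sum>l\<in>UNIV. A$i$l * x$l)"
          by (simp add: sum_product)
        finally show ?thesis unfolding r .
      qed
      have psdA': "psd A'"
        unfolding psd_sesq
      proof (intro conjI allI hA')
        fix x :: "complex^'n"
        define w where "w = (\<Sum>l\<in>UNIV. A$i$l * x$l)"
        define t where "t = - w / complex_of_real a"
        have r: "(\<Sum>k\<in>UNIV. cnj (x$k) * A$k$i) = cnj w"
          unfolding w_def by (simp add: herm_entry[OF h, of i] mult.commute)
        have "sesq A (x + e1 i t) (x + e1 i t) = sesq A x x + sesq A x (e1 i t) + sesq A (e1 i t) x + sesq A (e1 i t) (e1 i t)"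
          by (simp only: sesq_add_left sesq_add_right add_ac)
        also have "\<dots> = sesq A x x + cnj w * t + cnj t * w + cnj t * A$i$i * t"
          unfolding sesq_e1e1 unfolding sesq_e1_right sesq_e1_left r w_def[symmetric] ..
        also have "\<dots> = sesq A' x x"
          unfolding sesqA' w_def[symmetric] t_def aa using apos by (simp add: field_simps)
        finally show "0 \<le> Re (sesq A' x x)" using p psd_sesq by metis
      qed
      define c where "c = (\<chi> k. A$k$i)"
      have tr: "trace (A ** B) = trace (A' ** B) + sesq B c c / complex_of_real a"
      proof -
        have "trace (A ** B) = (\<Sum>k\<in>UNIV. \<Sum>l\<in>UNIV. A'$k$l * B$l$k + A$k$i * A$i$l * B$l$k / complex_of_real a)"
          unfolding trace_mult A'e using apos by (simp add: field_simps)
        also have "\<dots> = trace (A' ** B) + (\<Sum>k\<in>UNIV. \<Sum>l\<in>UNIV. A$k$i * A$i$l * B$l$k) / complex_of_real a"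
          unfolding trace_mult by (simp add: sum.distrib sum_divide_distrib)
        also have "(\<Sum>k\<in>UNIV. \<Sum>l\<in>UNIV. A$k$i * A$i$l * B$l$k) = (\<Sum>l\<in>UNIV. \<Sum>k\<in>UNIV. A$i$l * B$l$k * A$k$i)"
          by (subst sum.swap) (simp add: mult.commute mult.left_commute)
        also have "\<dots> = sesq B c c"
          unfolding sesq_def c_def using herm_entry[OF h, of _ i] by simp
        finally show ?thesis .
      qed
      have "0 \<le> Re (trace (A' ** B))" using insert.IH psdA' sA' by blast
      moreover have "0 \<le> Re (sesq B c c / complex_of_real a)"
      proof -
        have "0 \<le> Re (sesq B c c)" using B psd_sesq by blast
        then show ?thesis using apos by (simp add: Re_divide_of_real)
      qed
      ultimately show ?thesis unfolding tr by simp
    qed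
  qed
qed


lemma psd_trace_pos: "psd A \<Longrightarrow> psd B \<Longrightarrow> 0 \<le> Re (trace (A ** B))"
  using psd_trace_pos_ind[of B UNIV] unfolding supp_def by simp

lemma norm_axis_c: "norm (axis j (1::complex)) = 1"
proof -
  have "(\<Sum>i\<in>UNIV. (norm (axis j (1::complex) $ i))\<^sup>2) = (\<Sum>i\<in>UNIV. if i = j then 1 else 0)"
    by (rule sum.cong) (auto simp: axis_def)
  then show ?thesis unfolding norm_vec_def L2_set_def by simp
qed

lemma entry_le_opnorm: "cmod (M$i$j) \<le> opnorm M"
proof -
  have "(M *v axis j 1) $ i = M$i$j"
  proof -
    have "(M *v axis j 1) $ i = (\<Sum>k\<in>UNIV. if k = j then M$i$j else 0)"
      unfolding matrix_vector_mult_def vec_lambda_beta by (rule sum.cong) (auto simp: axis_def)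
    then show ?thesis by simp
  qed
  then have "cmod (M$i$j) \<le> norm (M *v axis j 1)" using Finite_Cartesian_Product.norm_nth_le[where x="M *v axis j 1" and i=i] by simp
  also have "\<dots> \<le> onorm (\<lambda>x. M *v x) * norm (axis j (1::complex))"
    by (rule onorm) simp
  finally show ?thesis unfolding opnorm_def norm_axis_c by simp
qed

locale gloc =
  fixes g :: "'n::finite \<Rightarrow> 'n \<Rightarrow> nat list \<Rightarrow> nat" and b :: nat
  assumes gtr: "\<And>i j. TR 2 (g i j)"
begin

definition Gf :: "'n \<Rightarrow> nat \<Rightarrow> nat" where "Gf i x = g i i [x, Suc x]"
definition Pf :: "'n \<Rightarrow> nat \<Rightarrow> nat" where
  "Pf i x = (if even (pd1 (Gf i x)) then pd1 (Gf i x) div 2 else 0)"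
definition Qf :: "'n \<Rightarrow> nat \<Rightarrow> nat" where "Qf i x = Suc (pd2 (pd2 (Gf i x)))"
definition uf :: "'n \<Rightarrow> nat \<Rightarrow> nat" where
  "uf i x = (Pf i x * 2 ^ Suc x + Qf i x - 1) div Qf i x"
definition Wf :: "nat \<Rightarrow> nat" where "Wf x = (\<Sum>i\<in>UNIV. Suc (uf i x))"
definition lf :: "nat \<Rightarrow> nat" where
  "lf x = (\<Sum>j<x + 1 + b. if 2 ^ Suc j * Wf x \<le> 2 ^ (b + Suc x) then 1 else 0)"
definition Ef :: "nat \<Rightarrow> nat" where "Ef x = x + 2 + b"
definition cwn :: "nat \<Rightarrow> nat" where "cwn x = scf (Suc (lf x)) (SF_a lf Ef x)"

lemma tr_Gf: "TR k h \<Longrightarrow> TR k (\<lambda>xs. Gf i (h xs))"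
  unfolding Gf_def using tr_comp2[OF gtr[of i i], of k h "\<lambda>xs. Suc (h xs)"] tr_suc by simp

lemma tr_uf: "TR k h \<Longrightarrow> TR k (\<lambda>xs. uf i (h xs))"
  unfolding uf_def Pf_def Qf_def by (intro tr_intros tr_pd1 tr_pd2 tr_Gf)

lemma tr_Wf: "TR k h \<Longrightarrow> TR k (\<lambda>xs. Wf (h xs))"
  unfolding Wf_def by (intro tr_setsum ballI tr_suc tr_uf) simp_all

lemma tr_lf: "TR k h \<Longrightarrow> TR k (\<lambda>xs. lf (h xs))"
proof -
  assume h: "TR k h"
  have "TR 2 (\<lambda>ys. if 2 ^ Suc (ys!0) * Wf (ys!1) \<le> 2 ^ (b + Suc (ys!1)) then 1 else 0)"
    by (intro tr_intros tr_Wf) simp_all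
  moreover have "TR 1 (\<lambda>xs. xs ! 0 + 1 + b)" by (intro tr_intros) simp
  ultimately have "TR 1 (\<lambda>xs. \<Sum>j<xs ! 0 + 1 + b. if 2 ^ Suc j * Wf (xs!0) \<le> 2 ^ (b + Suc (xs!0)) then 1 else 0)"
    by (rule tr_bsum1[where N="\<lambda>x. x + 1 + b" and B="\<lambda>j x. if 2 ^ Suc j * Wf x \<le> 2 ^ (b + Suc x) then 1 else 0"])
  then have "TR 1 (\<lambda>xs. lf (xs ! 0))" unfolding lf_def .
  from tr_comp1[OF this h] show ?thesis by simp
qed

lemma tr_cwn: "TR 1 (\<lambda>xs. cwn (xs ! 0))"
proof -
  have "TR 2 (\<lambda>ys. 2 ^ (Ef (ys!1) - lf (ys!0)))"
    unfolding Ef_def by (intro tr_intros tr_lf) simp_all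
  from tr_bsum1[OF this tr_x]
  have z: "TR 1 (\<lambda>xs. SF_Z lf Ef (xs!0))" unfolding SF_Z_def by simp
  have a: "TR 1 (\<lambda>xs. SF_a lf Ef (xs!0))"
    unfolding SF_a_def Ef_def by (intro tr_intros tr_lf z[unfolded Ef_def]) simp_all
  show ?thesis unfolding cwn_def by (intro tr_scf tr_suc tr_lf a tr_x)
qed

end


lemma count_dc:
  fixes P :: "nat \<Rightarrow> bool"
  assumes dc: "\<And>i j. i \<le> j \<Longrightarrow> P j \<Longrightarrow> P i"
  shows "(\<forall>j<D. P j) \<and> (\<Sum>j<D. if P j then 1 else 0::nat) = D \<or>
         (\<exists>k<D. (\<Sum>j<D. if P j then 1 else 0::nat) = k \<and> (\<forall>j<k. P j) \<and> \<not> P k)"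
proof (induction D)
  case 0 then show ?case by simp
next
  case (Suc D)
  then show ?case
  proof
    assume l: "(\<forall>j<D. P j) \<and> (\<Sum>j<D. if P j then 1 else 0::nat) = D"
    show ?thesis
    proof (cases "P D")
      case True then show ?thesis using l less_Suc_eq by auto
    next
      case False then show ?thesis using l by (intro disjI2 exI[of _ D]) auto
    qed
  next
    assume "\<exists>k<D. (\<Sum>j<D. if P j then 1 else 0::nat) = k \<and> (\<forall>j<k. P j) \<and> \<not> P k"
    then obtain k where k: "k < D" "(\<Sum>j<D. if P j then 1 else 0::nat) = k" "\<forall>j<k. P j" "\<not> P k" by blast
    have "\<not> P D" using dc[of k D] k by auto
    then show ?thesis using k by (intro disjI2 exI[of _ k]) auto
  qed
qed

lemma geom_le1: "(\<Sum>t\<le>x. (1/2::real) ^ Suc t) \<le> 1"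
proof -
  have "(\<Sum>t\<le>x. (1/2::real) ^ Suc t) = 1 - (1/2) ^ Suc x" by (induction x) (auto simp: field_simps)
  then show ?thesis by simp
qed

lemma re_decode: "Re (decode_cq n) = real_of_int (int_decode (pd1 n)) / real (Suc (pd2 (pd2 n)))"
  unfolding decode_cq_def pd_correct by simp

lemma int_decode_pos: "max (real_of_int (int_decode a)) 0 = real (if even a then a div 2 else 0)"
  unfolding int_decode_def sum_decode_def by auto

definition trR :: "(bool list \<Rightarrow> complex^'n^'n) \<Rightarrow> bool list \<Rightarrow> real" where
  "trR R s = (\<Sum>i\<in>UNIV. Re (R s $ i $ i))"

locale approx = gloc g b for g :: "'n::finite \<Rightarrow> 'n \<Rightarrow> nat list \<Rightarrow> nat" and b +
  fixes R :: "bool list \<Rightarrow> complex^'n^'n"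
  assumes psdR: "\<And>s. psd (R s)"
    and apx: "\<And>s k. opnorm (R s - (\<chi> i j. decode_cq (g i j [str_code s, k]))) < (1/2)^k"
    and Tsum: "\<And>F. finite F \<Longrightarrow> (\<Sum>s\<in>F. trR R s) \<le> real CARD('n)"
    and bbig: "16 * CARD('n) \<le> 2 ^ b"
begin

definition sd :: "nat \<Rightarrow> bool list" where "sd = inv str_code"

lemma sd_code: "str_code (sd x) = x"
  unfolding sd_def using str_code_surj by (simp add: f_inv_into_f)
lemma code_sd: "sd (str_code s) = s"
  unfolding sd_def using str_code_inj by simp

lemma entry_bounds:
  fixes x :: nat and i :: 'n
  defines "eps \<equiv> (1/2::real) ^ Suc x"
  shows "Re (R (sd x) $ i $ i) \<le> (real (uf i x) + 1) * eps"
    and "(real (uf i x) + 1) * eps \<le> Re (R (sd x) $ i $ i) + 3 * eps"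
proof -
  define G where "G = decode_cq (Gf i x)"
  define r where "r = Re (R (sd x) $ i $ i)"
  have r0: "0 \<le> r" unfolding r_def by (rule psd_diag(2)[OF psdR])
  have "cmod ((R (sd x) - (\<chi> i j. decode_cq (g i j [str_code (sd x), Suc x]))) $ i $ i) < eps"
    using entry_le_opnorm apx[of "sd x" "Suc x"] unfolding eps_def by (meson le_less_trans)
  then have "cmod (R (sd x) $ i $ i - G) < eps" unfolding G_def Gf_def sd_code by simp
  then have close: "\<bar>r - Re G\<bar> < eps" unfolding r_def using abs_Re_le_cmod[of "R (sd x) $ i $ i - G"] by simp
  define p where "p = real (Pf i x) / real (Qf i x)"
  have p: "p = max (Re G) 0"
  proof -
    define qv where "qv = real (Suc (pd2 (pd2 (Gf i x))))"
    have qv: "qv > 0" unfolding qv_def by simp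
    have m: "max (z / qv) 0 = max z 0 / qv" for z :: real
      using qv by (cases "z \<le> 0") (auto simp: max_def divide_le_0_iff)
    have "Re G = real_of_int (int_decode (pd1 (Gf i x))) / qv" unfolding G_def re_decode qv_def ..
    then have "max (Re G) 0 = max (real_of_int (int_decode (pd1 (Gf i x))) / qv) 0" by simp
    also have "\<dots> = max (real_of_int (int_decode (pd1 (Gf i x)))) 0 / qv" by (rule m)
    also have "\<dots> = real (if even (pd1 (Gf i x)) then pd1 (Gf i x) div 2 else 0) / qv"
      unfolding int_decode_pos ..
    finally have "max (Re G) 0 = real (if even (pd1 (Gf i x)) then pd1 (Gf i x) div 2 else 0) / qv" .
    then show ?thesis unfolding p_def Pf_def Qf_def qv_def by simp
  qed
  have q: "Qf i x > 0" unfolding Qf_def by simp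
  note c = ceil_div[OF q, of "Pf i x * 2 ^ Suc x"]
  have u1: "real (Pf i x) * 2 ^ Suc x \<le> real (uf i x) * real (Qf i x)"
  proof -
    have "Pf i x * 2 ^ Suc x \<le> uf i x * Qf i x" using c(1) unfolding uf_def .
    then have "real (Pf i x * 2 ^ Suc x) \<le> real (uf i x * Qf i x)" by (simp only: of_nat_le_iff)
    then show ?thesis by simp
  qed
  have u2: "real (uf i x) * real (Qf i x) < real (Pf i x) * 2 ^ Suc x + real (Qf i x)"
  proof -
    have "uf i x * Qf i x < Pf i x * 2 ^ Suc x + Qf i x" using c(2) unfolding uf_def .
    then have "real (uf i x * Qf i x) < real (Pf i x * 2 ^ Suc x + Qf i x)" by (simp only: of_nat_less_iff)
    then show ?thesis by simp
  qed
  have qr: "real (Qf i x) > 0" using q by simp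
  have e2: "(2::real) ^ Suc x * eps = 1" unfolding eps_def by (simp add: power_one_over)
  have pu1: "p \<le> real (uf i x) * eps"
  proof -
    have "p * 2 ^ Suc x \<le> real (uf i x)" unfolding p_def using u1 qr by (simp add: field_simps)
    then have "p * 2 ^ Suc x * eps \<le> real (uf i x) * eps" by (rule mult_right_mono) (simp add: eps_def)
    then show ?thesis using e2 by (simp add: mult.assoc)
  qed
  have pu2: "real (uf i x) * eps < p + eps"
  proof -
    have "real (uf i x) < p * 2 ^ Suc x + 1" unfolding p_def using u2 qr by (simp add: field_simps)
    then have "real (uf i x) * eps < (p * 2 ^ Suc x + 1) * eps" by (rule mult_strict_right_mono) (simp add: eps_def)
    also have "(p * 2 ^ Suc x + 1) * eps = p * (2 ^ Suc x * eps) + eps" by (simp add: algebra_simps)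
    finally show ?thesis unfolding e2 by simp
  qed
  have "r \<le> p + eps" using close p by linarith
  then show "Re (R (sd x) $ i $ i) \<le> (real (uf i x) + 1) * eps" unfolding r_def[symmetric] using pu1 by (simp add: algebra_simps)
  have "p \<le> r + eps" using close p r0 by linarith
  then show "(real (uf i x) + 1) * eps \<le> Re (R (sd x) $ i $ i) + 3 * eps" unfolding r_def[symmetric] using pu2 by (simp add: algebra_simps)
qed



lemma W_bounds:
  fixes x :: nat
  shows "trR R (sd x) \<le> real (Wf x) * (1/2::real) ^ Suc x" "real (Wf x) * (1/2::real) ^ Suc x \<le> trR R (sd x) + 3 * real CARD('n) * (1/2::real) ^ Suc x"
proof -
  define eps where "eps = (1/2::real) ^ Suc x"
  have w: "real (Wf x) * eps = (\<Sum>i\<in>UNIV. (real (uf i x) + 1) * eps)"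
  proof -
    have w0: "real (Wf x) = (\<Sum>i\<in>UNIV. real (uf i x) + 1)" unfolding Wf_def by (simp add: add.commute)
    show ?thesis unfolding w0 by (rule sum_distrib_right)
  qed
  have "trR R (sd x) \<le> real (Wf x) * eps" unfolding w unfolding trR_def eps_def
    by (rule sum_mono) (rule entry_bounds(1))
  then show "trR R (sd x) \<le> real (Wf x) * (1/2::real) ^ Suc x" unfolding eps_def .
  have "real (Wf x) * eps \<le> (\<Sum>i\<in>UNIV. Re (R (sd x) $ i $ i) + 3 * eps)" unfolding w unfolding eps_def
    by (rule sum_mono) (rule entry_bounds(2))
  also have "\<dots> = trR R (sd x) + 3 * real CARD('n) * eps" unfolding trR_def by (simp add: sum.distrib)
  finally show "real (Wf x) * (1/2::real) ^ Suc x \<le> trR R (sd x) + 3 * real CARD('n) * (1/2::real) ^ Suc x" unfolding eps_def .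
qed

lemma T_le_N: "trR R s \<le> real CARD('n)" using Tsum[of "{s}"] by simp

lemma N_pos: "real CARD('n) \<ge> 1" by simp

lemma W_le: "real (Wf x) * (1/2) ^ Suc x \<le> 2 ^ b"
proof -
  have e: "(1/2::real) ^ Suc x \<le> 1" by (intro power_le_one) simp_all
  have "real (Wf x) * (1/2) ^ Suc x \<le> trR R (sd x) + 3 * real CARD('n) * (1/2) ^ Suc x" by (rule W_bounds(2))
  also have "\<dots> \<le> real CARD('n) + 3 * real CARD('n) * 1" using T_le_N e by (intro add_mono mult_left_mono) auto
  also have "\<dots> \<le> real (16 * CARD('n))" by simp
  also have "\<dots> \<le> 2 ^ b" using bbig by (metis of_nat_le_iff of_nat_numeral of_nat_power)
  finally show ?thesis .
qed

definition PP :: "nat \<Rightarrow> nat \<Rightarrow> bool" where "PP x j \<longleftrightarrow> 2 ^ Suc j * Wf x \<le> 2 ^ (b + Suc x)"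

lemma lf_PP: "lf x = (\<Sum>j<x + 1 + b. if PP x j then 1 else 0)" unfolding lf_def PP_def ..

lemma PP_dc: "i \<le> j \<Longrightarrow> PP x j \<Longrightarrow> PP x i"
  unfolding PP_def by (meson le_trans mult_le_mono1 power_increasing Suc_le_mono one_le_numeral)

lemma lf_cases: "(\<forall>j<x + 1 + b. PP x j) \<and> lf x = x + 1 + b \<or> (lf x < x + 1 + b \<and> (\<forall>j<lf x. PP x j) \<and> \<not> PP x (lf x))"
  using count_dc[of "PP x" "x + 1 + b", OF PP_dc] unfolding lf_PP[symmetric] by auto

lemma lf_le: "lf x \<le> x + 1 + b" using lf_cases[of x] by auto

lemma tr_le_lf: "trR R (sd x) \<le> 2 ^ b * (1/2) ^ lf x"
proof -
  have "real (Wf x) * (1/2) ^ Suc x \<le> 2 ^ b * (1/2) ^ lf x"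
  proof (cases "lf x = 0")
    case True then show ?thesis using W_le by simp
  next
    case False
    then have "PP x (lf x - 1)" using lf_cases[of x] by auto
    then have "2 ^ lf x * Wf x \<le> 2 ^ (b + Suc x)" unfolding PP_def using False by simp
    then have "real (2 ^ lf x * Wf x) \<le> real (2 ^ (b + Suc x))" by (simp only: of_nat_le_iff)
    then have "2 ^ lf x * real (Wf x) \<le> 2 ^ b * 2 ^ Suc x" by (simp add: power_add)
    then show ?thesis by (simp add: field_simps power_one_over)
  qed
  then show ?thesis using W_bounds(1)[of x] by linarith
qed

lemma lf_kraft_term: "(1/2::real) ^ lf x \<le> 2 * (real (Wf x) * (1/2) ^ Suc x) / 2 ^ b + (1/2) ^ Suc (x + b)"
proof (cases "lf x = x + 1 + b")
  case True
  have "0 \<le> 2 * (real (Wf x) * (1/2::real) ^ Suc x) / 2 ^ b" by simp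
  then show ?thesis using True by simp
next
  case False
  then have "\<not> PP x (lf x)" using lf_cases[of x] by auto
  then have "2 ^ (b + Suc x) < 2 ^ Suc (lf x) * Wf x" unfolding PP_def by simp
  then have "real (2 ^ (b + Suc x)) < real (2 ^ Suc (lf x) * Wf x)" by (simp only: of_nat_less_iff)
  then have "2 ^ b * 2 ^ Suc x < 2 * 2 ^ lf x * real (Wf x)" by (simp add: power_add)
  then have "(1/2::real) ^ lf x < 2 * (real (Wf x) * (1/2) ^ Suc x) / 2 ^ b"
    by (simp add: field_simps power_one_over)
  moreover have "(0::real) \<le> (1/2) ^ Suc (x + b)" by simp
  ultimately show ?thesis by linarith
qed

lemma sd_inj: "inj sd"
  unfolding sd_def using str_code_surj by (rule surj_imp_inj_inv)

lemma lf_kraft: "(\<Sum>t\<le>x. (1/2::real) ^ lf t) \<le> 1"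
proof -
  have "(\<Sum>t\<le>x. (1/2::real) ^ lf t) \<le> (\<Sum>t\<le>x. 2 * (real (Wf t) * (1/2) ^ Suc t) / 2 ^ b + (1/2) ^ Suc (t + b))"
    by (rule sum_mono) (rule lf_kraft_term)
  also have "\<dots> = (\<Sum>t\<le>x. 2 / 2 ^ b * (real (Wf t) * (1/2) ^ Suc t) + (1/2) ^ b * (1/2) ^ Suc t)"
  proof (rule sum.cong[OF refl])
    fix t
    have t2: "(1/2::real) ^ Suc (t + b) = (1/2) ^ b * (1/2) ^ Suc t"
      by (metis add_Suc add.commute power_add)
    show "2 * (real (Wf t) * (1/2) ^ Suc t) / 2 ^ b + (1/2) ^ Suc (t + b) =
          2 / 2 ^ b * (real (Wf t) * (1/2) ^ Suc t) + (1/2) ^ b * (1/2) ^ Suc t"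
      unfolding t2 by simp
  qed
  also have "\<dots> = 2 / 2 ^ b * (\<Sum>t\<le>x. real (Wf t) * (1/2) ^ Suc t) + (1/2) ^ b * (\<Sum>t\<le>x. (1/2) ^ Suc t)"
    by (simp only: sum.distrib sum_distrib_left)
  also have "\<dots> \<le> 2 / 2 ^ b * (4 * real CARD('n)) + (1/2) ^ b * 1"
  proof (intro add_mono mult_left_mono)
    have "(\<Sum>t\<le>x. real (Wf t) * (1/2) ^ Suc t) \<le> (\<Sum>t\<le>x. trR R (sd t) + 3 * real CARD('n) * (1/2) ^ Suc t)"
      by (rule sum_mono) (rule W_bounds(2))
    also have "\<dots> = (\<Sum>t\<le>x. trR R (sd t)) + 3 * real CARD('n) * (\<Sum>t\<le>x. (1/2) ^ Suc t)"
      by (simp add: sum.distrib sum_distrib_left)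
    also have "(\<Sum>t\<le>x. trR R (sd t)) = (\<Sum>s\<in>sd ` {..x}. trR R s)"
    proof -
      have "inj_on sd {..x}" by (rule inj_on_subset[OF sd_inj]) simp
      then show ?thesis by (simp add: sum.reindex)
    qed
    also have "\<dots> \<le> real CARD('n)" by (rule Tsum) simp
    also have "3 * real CARD('n) * (\<Sum>t\<le>x. (1/2::real) ^ Suc t) \<le> 3 * real CARD('n) * 1"
      by (rule mult_left_mono[OF geom_le1]) simp
    finally show "(\<Sum>t\<le>x. real (Wf t) * (1/2) ^ Suc t) \<le> 4 * real CARD('n)" by simp
    show "(\<Sum>t\<le>x. (1/2::real) ^ Suc t) \<le> 1" by (rule geom_le1)
  qed simp_all
  also have "\<dots> \<le> 1"
  proof -
    have b: "real (16 * CARD('n)) \<le> 2 ^ b" using bbig by (metis of_nat_le_iff of_nat_numeral of_nat_power)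
    have "2 / 2 ^ b * (4 * real CARD('n)) = 8 * real CARD('n) / 2 ^ b" by simp
    also have "\<dots> \<le> 1/2" using b by (simp add: field_simps)
    finally have 1: "2 / 2 ^ b * (4 * real CARD('n)) \<le> 1/2" .
    have "(1/2::real) ^ b * 1 = 1 / 2 ^ b" by (simp add: power_one_over)
    also have "\<dots> \<le> 1/2"
    proof -
      have "16 * real CARD('n) \<le> 2 ^ b" using b by simp
      then have "2 \<le> (2::real) ^ b" using N_pos by linarith
      then show ?thesis by (simp add: field_simps)
    qed
    finally show ?thesis using 1 by linarith
  qed
  finally show ?thesis .
qed


lemma SF_inst: "SFloc lf Ef"
proof
  fix x t :: nat assume "t < x"
  then show "lf t \<le> Ef x" using lf_le[of t] unfolding Ef_def by simp
next
  fix x show "Suc (lf x) \<le> Ef x" using lf_le[of x] unfolding Ef_def by simp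
next
  fix x show "(\<Sum>t\<le>x. (1/2::real) ^ lf t) \<le> 1" by (rule lf_kraft)
qed

lemma cw_pf: "x \<noteq> y \<Longrightarrow> \<not> prefix (cw lf Ef x) (cw lf Ef y)"
  using SFloc.cw_prefix_free[OF SF_inst] by blast

lemma cw_inj': "inj (cw lf Ef)"
  using SFloc.cw_inj[OF SF_inst] .

lemma cwn_eq: "cwn x = str_code (cw lf Ef x)"
  unfolding cwn_def cw_def scf_correct ..

lemma length_cw: "length (cw lf Ef x) = Suc (lf x)"
  unfolding cw_def by simp

definition Cc :: "bool list \<Rightarrow> bool list option" where
  "Cc p = (if \<exists>x. cw lf Ef x = p then Some (sd (THE x. cw lf Ef x = p)) else None)"

lemma cwn_inj: "inj cwn"
proof (rule injI)
  fix x y assume "cwn x = cwn y"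
  then have "cw lf Ef x = cw lf Ef y" unfolding cwn_eq using str_code_inj by (simp add: inj_eq)
  then show "x = y" using cw_inj' by (simp add: inj_eq)
qed

lemma Cc_computer: "computer Cc"
  unfolding computer_def
proof (intro conjI allI impI)
  let ?phi = "\<lambda>n. if \<exists>x. cwn x = n then Some (THE x. cwn x = n) else None"
  have pr: "partial_recursive1 ?phi" by (rule decoder_pr[OF tr_cwn cwn_inj])
  have eqv: "cwn x = str_code p \<longleftrightarrow> cw lf Ef x = p" for x p
    unfolding cwn_eq using str_code_inj by (simp add: inj_eq)
  have "?phi (str_code p) = map_option str_code (Cc p)" for p
  proof (cases "\<exists>x. cw lf Ef x = p")
    case True
    then obtain x where x: "cw lf Ef x = p" by (elim exE)
    have u: "y = x" if "cw lf Ef y = p" for y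
    proof -
      have "cw lf Ef y = cw lf Ef x" using x that by simp
      then show "y = x" using cw_inj' by (rule injD[rotated])
    qed
    have t1: "(THE x. cw lf Ef x = p) = x" using x u by (rule the_equality)
    have t2: "(THE y. cwn y = str_code p) = x" unfolding eqv using x u by (rule the_equality)
    have e2: "\<exists>y. cwn y = str_code p" using x eqv by blast
    have "Cc p = Some (sd x)" unfolding Cc_def t1 using True by simp
    then show ?thesis using e2 t2 by (simp add: sd_code)
  next
    case False
    then show ?thesis unfolding Cc_def eqv by simp
  qed
  then show "\<exists>\<phi>. partial_recursive1 \<phi> \<and> (\<forall>p. \<phi> (str_code p) = map_option str_code (Cc p))"
    using pr by blast
next
  fix p q assume "Cc p \<noteq> None" "Cc q \<noteq> None" "prefix p q"
  then obtain x y where xy: "cw lf Ef x = p" "cw lf Ef y = q" unfolding Cc_def by (auto split: if_splits)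
  show "p = q"
  proof (cases "x = y")
    case True then show ?thesis using xy by simp
  next
    case False then show ?thesis using cw_pf[OF False] xy \<open>prefix p q\<close> by simp
  qed
qed

lemma Cc_cw: "Cc (cw lf Ef (str_code s)) = Some s"
proof -
  have "(THE x. cw lf Ef x = cw lf Ef (str_code s)) = str_code s"
    by (rule the_equality) (auto intro: injD[OF cw_inj'])
  then show ?thesis unfolding Cc_def by (auto simp: code_sd)
qed

lemma short_program:
  assumes "optimal_computer U"
  shows "\<exists>sim. \<forall>s. \<exists>p'. U p' = Some s \<and> length p' \<le> Suc (lf (str_code s)) + sim"
proof -
  obtain sim where sim: "\<forall>p s. Cc p = Some s \<longrightarrow> (\<exists>p'. U p' = Some s \<and> length p' \<le> length p + sim)"
    using assms Cc_computer unfolding optimal_computer_def by blast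
  have "\<exists>p'. U p' = Some s \<and> length p' \<le> Suc (lf (str_code s)) + sim" for s
    using sim[rule_format, OF Cc_cw[of s]] unfolding length_cw by simp
  then show ?thesis by blast
qed

lemma tr_bound: "trR R s \<le> 2 ^ b * (1/2) ^ lf (str_code s)"
  using tr_le_lf[of "str_code s"] unfolding code_sd .

end


lemma kraft_fin:
  "\<forall>F::bool list set. finite F \<and> (\<forall>p\<in>F. length p \<le> n) \<and> (\<forall>p\<in>F. \<forall>q\<in>F. prefix p q \<longrightarrow> p = q)
     \<longrightarrow> (\<Sum>p\<in>F. (1/2::real) ^ length p) \<le> 1"
proof (induction n)
  case 0
  show ?case
  proof (intro allI impI)
    fix F :: "bool list set" assume a: "finite F \<and> (\<forall>p\<in>F. length p \<le> 0) \<and> (\<forall>p\<in>F. \<forall>q\<in>F. prefix p q \<longrightarrow> p = q)"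
    then have "F \<subseteq> {[]}" by auto
    then have "F = {} \<or> F = {[]}" by auto
    then show "(\<Sum>p\<in>F. (1/2::real) ^ length p) \<le> 1" by auto
  qed
next
  case (Suc n)
  show ?case
  proof (intro allI impI)
    fix F :: "bool list set" assume a: "finite F \<and> (\<forall>p\<in>F. length p \<le> Suc n) \<and> (\<forall>p\<in>F. \<forall>q\<in>F. prefix p q \<longrightarrow> p = q)"
    have fin: "finite F" using a by (rule conjunct1)
    have len: "\<forall>p\<in>F. length p \<le> Suc n" using conjunct1[OF conjunct2[OF a]] .
    have pf: "\<forall>p\<in>F. \<forall>q\<in>F. prefix p q \<longrightarrow> p = q" using conjunct2[OF conjunct2[OF a]] .
    show "(\<Sum>p\<in>F. (1/2::real) ^ length p) \<le> 1"
    proof (cases "[] \<in> F")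
      case True
      have "[] = q" if "q \<in> F" for q using pf[rule_format, OF True that Nil_prefix] .
      then have "F = {[]}" using True by blast
      then show ?thesis by simp
    next
      case False
      define F1 where "F1 = {q. True # q \<in> F}"
      define F0 where "F0 = {q. False # q \<in> F}"
      have img1: "(#) True ` F1 \<subseteq> F" unfolding F1_def by auto
      have img0: "(#) False ` F0 \<subseteq> F" unfolding F0_def by auto
      have fin1: "finite F1" using finite_subset[OF img1 fin] by (rule finite_imageD) simp
      have fin0: "finite F0" using finite_subset[OF img0 fin] by (rule finite_imageD) simp
      have F: "F = (#) True ` F1 \<union> (#) False ` F0"
      proof
        show "F \<subseteq> (#) True ` F1 \<union> (#) False ` F0"
        proof
          fix p assume "p \<in> F"
          then obtain c q where "p = c # q" using False by (cases p) auto
          then show "p \<in> (#) True ` F1 \<union> (#) False ` F0" using \<open>p \<in> F\<close> unfolding F1_def F0_def by (cases c) auto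
        qed
        show "(#) True ` F1 \<union> (#) False ` F0 \<subseteq> F" using img1 img0 by blast
      qed
      have h1: "(\<Sum>p\<in>F1. (1/2::real) ^ length p) \<le> 1"
      proof (rule Suc.IH[rule_format, of F1], intro conjI ballI impI)
        show "finite F1" by (rule fin1)
        fix p assume "p \<in> F1" then show "length p \<le> n" using len unfolding F1_def by fastforce
      next
        fix p q assume p: "p \<in> F1" and q: "q \<in> F1" and pq: "prefix p q"
        have "True # p = True # q" using pf[rule_format, of "True # p" "True # q"] p q pq unfolding F1_def by simp
        then show "p = q" by simp
      qed
      have h0: "(\<Sum>p\<in>F0. (1/2::real) ^ length p) \<le> 1"
      proof (rule Suc.IH[rule_format, of F0], intro conjI ballI impI)
        show "finite F0" by (rule fin0)
        fix p assume "p \<in> F0" then show "length p \<le> n" using len unfolding F0_def by fastforce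
      next
        fix p q assume p: "p \<in> F0" and q: "q \<in> F0" and pq: "prefix p q"
        have "False # p = False # q" using pf[rule_format, of "False # p" "False # q"] p q pq unfolding F0_def by simp
        then show "p = q" by simp
      qed
      have "(\<Sum>p\<in>F. (1/2::real) ^ length p) = (\<Sum>p\<in>(#) True ` F1. (1/2::real) ^ length p) + (\<Sum>p\<in>(#) False ` F0. (1/2::real) ^ length p)"
        unfolding F by (rule sum.union_disjoint) (use fin1 fin0 in auto)
      also have "\<dots> = (\<Sum>p\<in>F1. (1/2::real) ^ length p) / 2 + (\<Sum>p\<in>F0. (1/2::real) ^ length p) / 2"
        by (simp add: sum.reindex sum_divide_distrib)
      also have "\<dots> \<le> 1" using h1 h0 by simp
      finally show ?thesis .
    qed
  qed
qed

lemma kraft_summable: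
  fixes A :: "bool list set"
  assumes pf: "\<forall>p\<in>A. \<forall>q\<in>A. prefix p q \<longrightarrow> p = q"
  shows "(\<lambda>p. (1/2::real) ^ length p) summable_on A"
proof (rule nonneg_bdd_above_summable_on)
  show "bdd_above (sum (\<lambda>p. (1/2::real) ^ length p) ` {F. F \<subseteq> A \<and> finite F})"
  proof (rule bdd_aboveI)
    fix y assume "y \<in> sum (\<lambda>p. (1/2::real) ^ length p) ` {F. F \<subseteq> A \<and> finite F}"
    then obtain F where F: "F \<subseteq> A" "finite F" "y = (\<Sum>p\<in>F. (1/2::real) ^ length p)" by auto
    define n where "n = Max (length ` F)"
    have "\<forall>p\<in>F. length p \<le> n" unfolding n_def using F(2) by auto
    moreover have "\<forall>p\<in>F. \<forall>q\<in>F. prefix p q \<longrightarrow> p = q" using pf F(1) by blast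
    ultimately show "y \<le> 1" using kraft_fin[rule_format, of F n] F by simp
  qed
qed simp

lemma Pc_ge:
  assumes "computer U" "U p = Some s"
  shows "(1/2::real) ^ length p \<le> Pc U s"
proof -
  have pf: "\<forall>p\<in>{p. U p = Some s}. \<forall>q\<in>{p. U p = Some s}. prefix p q \<longrightarrow> p = q"
    using assms(1) unfolding computer_def by auto
  have "(\<Sum>q\<in>{p}. (1/2::real) ^ length q) \<le> Pc U s"
    unfolding Pc_def by (rule finite_sum_le_infsum[OF kraft_summable[OF pf]]) (use assms(2) in auto)
  then show ?thesis by simp
qed

lemma trR_has_sum:
  fixes R :: "bool list \<Rightarrow> complex^'n::finite^'n"
  assumes "povm R"
  shows "((\<lambda>s. trR R s) has_sum real CARD('n)) UNIV"
proof -
  have bl: "bounded_linear (\<lambda>M::complex^'n^'n. \<Sum>i\<in>UNIV. Re (M $ i $ i))"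
    by (intro bounded_linear_sum bounded_linear_compose[OF bounded_linear_Re]
        bounded_linear_compose[OF bounded_linear_vec_nth bounded_linear_vec_nth])
  have "(R has_sum mat 1) UNIV" using assms unfolding povm_def by blast
  from has_sum_bounded_linear[OF bl this]
  show ?thesis unfolding trR_def by (simp add: mat_def)
qed

lemma Tsum_from_povm:
  fixes R :: "bool list \<Rightarrow> complex^'n::finite^'n"
  assumes "povm R" "finite F"
  shows "(\<Sum>s\<in>F. trR R s) \<le> real CARD('n)"
proof (rule finite_sum_le_has_sum[OF trR_has_sum[OF assms(1)] assms(2)])
  fix s
  have "psd (R s)" using assms(1) unfolding povm_def loewner_le_def by simp
  then show "0 \<le> trR R s" unfolding trR_def by (intro sum_nonneg) (rule psd_diag(2))
qed simp


lemma neglog: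
  assumes t0: "0 \<le> t" and tle: "t \<le> 2 ^ d * (1/2) ^ K"
  shows "ereal (real K) - ereal (real d) \<le> neg_log2 t"
proof (cases "t = 0")
  case True then show ?thesis unfolding neg_log2_def by simp
next
  case False
  then have tp: "t > 0" using t0 by simp
  have e: "(2::real) ^ d * (1/2) ^ K = 2 powr (real d - real K)"
    by (simp add: powr_diff powr_realpow power_one_over)
  have tle': "t \<le> 2 powr (real d - real K)" using tle unfolding e .
  have "log 2 t \<le> log 2 (2 powr (real d - real K))"
    using log_le_cancel_iff[of 2 t "2 powr (real d - real K)"] tle' tp by simp
  then have "log 2 t \<le> real d - real K" by simp
  then show ?thesis unfolding neg_log2_def using False by simp
qed

lemma Kc_le: "U p = Some s \<Longrightarrow> Kc U s \<le> length p"
  unfolding Kc_def by (rule Least_le) blast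

theorem mainTheorem1:
  fixes U :: "bool list \<Rightarrow> bool list option"
    and R :: "bool list \<Rightarrow> complex^'n^'n"
  assumes "optimal_computer U"
    and "computable_mat_fun R"
    and "povm R"
  shows "(\<exists>d::nat. \<forall>\<rho> s. density_matrix \<rho> \<longrightarrow>
            ereal (real (Kc U s)) - ereal (real d) \<le> neg_log2 (Re (trace (\<rho> ** R s)))) \<and>
         (\<exists>c::real. c > 0 \<and> (\<forall>\<rho> s. density_matrix \<rho> \<longrightarrow>
            Re (trace (\<rho> ** R s)) \<le> c * Pc U s))"
proof -
  obtain g where g: "\<forall>i j. total_recursive 2 (g i j)"
    and apx: "\<forall>s k. opnorm (R s - (\<chi> i j. decode_cq (g i j [str_code s, k]))) < (1/2) ^ k"
    using assms(2) unfolding computable_mat_fun_def by blast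
  define b where "b = CARD('n) + 4"
  have bbig: "16 * CARD('n) \<le> 2 ^ b"
  proof -
    have "CARD('n) \<le> 2 ^ CARD('n)" using less_exp[of "CARD('n)"] by linarith
    then show ?thesis unfolding b_def by (simp add: power_add)
  qed
  have psdR: "psd (R s)" for s using assms(3) unfolding povm_def loewner_le_def by simp
  interpret A: approx g b R
    by unfold_locales (use g apx psdR Tsum_from_povm[OF assms(3)] bbig in auto)
  obtain sim where sim: "\<forall>s. \<exists>p'. U p' = Some s \<and> length p' \<le> Suc (A.lf (str_code s)) + sim"
    using A.short_program[OF assms(1)] by blast
  have compU: "computer U" using assms(1) unfolding optimal_computer_def by blast
  define c where "c = real CARD('n) * 2 ^ b * 2 * 2 ^ sim"
  have cpos: "c > 0" unfolding c_def by simp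
  have key: "0 \<le> Re (trace (\<rho> ** R s)) \<and> (\<exists>p'. U p' = Some s \<and> Re (trace (\<rho> ** R s)) \<le> c * (1/2) ^ length p')"
    if d: "density_matrix \<rho>" for \<rho> s
  proof -
    obtain p' where p': "U p' = Some s" "length p' \<le> Suc (A.lf (str_code s)) + sim" using sim by blast
    let ?t = "Re (trace (\<rho> ** R s))"
    have t0: "0 \<le> ?t" by (rule psd_trace_pos[OF density_psd[OF d] psdR])
    have "?t \<le> real CARD('n) * trR R s" using trace_upper[OF d psdR] unfolding trR_def .
    also have "\<dots> \<le> real CARD('n) * (2 ^ b * (1/2) ^ A.lf (str_code s))"
      by (rule mult_left_mono[OF A.tr_bound]) simp
    also have "(1/2::real) ^ A.lf (str_code s) = 2 * 2 ^ sim * (1/2) ^ (Suc (A.lf (str_code s)) + sim)"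
      by (simp add: power_add power_one_over)
    also have "(1/2::real) ^ (Suc (A.lf (str_code s)) + sim) \<le> (1/2) ^ length p'"
      by (rule power_decreasing[OF p'(2)]) simp_all
    finally have "?t \<le> real CARD('n) * (2 ^ b * (2 * 2 ^ sim * (1/2) ^ length p'))"
      by (simp add: mult_left_mono)
    then have "?t \<le> c * (1/2) ^ length p'" unfolding c_def by (simp add: algebra_simps)
    then show ?thesis using t0 p'(1) by blast
  qed
  show ?thesis
  proof
    define d where "d = CARD('n) + b + 1 + sim"
    have cd: "c \<le> 2 ^ d"
    proof -
      have "real CARD('n) \<le> 2 ^ CARD('n)" using less_exp[of "CARD('n)"]
        by (metis less_imp_le of_nat_le_iff of_nat_numeral of_nat_power)
      then have "real CARD('n) * (2 ^ b * 2 * 2 ^ sim) \<le> 2 ^ CARD('n) * (2 ^ b * 2 * 2 ^ sim)"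
        by (rule mult_right_mono) simp
      then show ?thesis unfolding c_def d_def by (simp add: power_add algebra_simps)
    qed
    show "\<exists>d::nat. \<forall>\<rho> s. density_matrix \<rho> \<longrightarrow>
            ereal (real (Kc U s)) - ereal (real d) \<le> neg_log2 (Re (trace (\<rho> ** R s)))"
    proof (intro exI allI impI)
      fix \<rho> :: "complex^'n^'n" and s assume dm: "density_matrix \<rho>"
      obtain p' where p': "U p' = Some s" "Re (trace (\<rho> ** R s)) \<le> c * (1/2) ^ length p'"
        and t0: "0 \<le> Re (trace (\<rho> ** R s))" using key[OF dm] by blast
      have "Re (trace (\<rho> ** R s)) \<le> c * (1/2) ^ length p'" by (rule p'(2))
      also have "\<dots> \<le> 2 ^ d * (1/2) ^ Kc U s"
        by (rule mult_mono[OF cd power_decreasing[OF Kc_le[where U=U and p=p' and s=s, OF p'(1)]]]) simp_all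
      finally show "ereal (real (Kc U s)) - ereal (real d) \<le> neg_log2 (Re (trace (\<rho> ** R s)))"
        by (rule neglog[OF t0])
    qed
  next
    show "\<exists>c::real. c > 0 \<and> (\<forall>\<rho> s. density_matrix \<rho> \<longrightarrow> Re (trace (\<rho> ** R s)) \<le> c * Pc U s)"
    proof (intro exI conjI allI impI)
      show "c > 0" by (rule cpos)
      fix \<rho> :: "complex^'n^'n" and s assume dm: "density_matrix \<rho>"
      obtain p' where p': "U p' = Some s" "Re (trace (\<rho> ** R s)) \<le> c * (1/2) ^ length p'"
        using key[OF dm] by blast
      have "c * (1/2) ^ length p' \<le> c * Pc U s"
        by (rule mult_left_mono[OF Pc_ge[OF compU p'(1)]]) (use cpos in simp)
      then show "Re (trace (\<rho> ** R s)) \<le> c * Pc U s" using p'(2) by linarith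
    qed
  qed
qed

end
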